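(* Let $N=(n_1,\dots,n_k)$ with $1\le n_1\le\cdots\le n_k$, and let $C$ be a nonsingular $|N|\times|N|$ complex matrix that is $N$-upper Toeplitz and $N$-Hermitian. Then there is a nonsingular $N$-upper Toeplitz matrix $S$ such that $S^{\maltese}CS=\varepsilon_1I_{n_1}\oplus\cdots\oplus\varepsilon_kI_{n_k}$ with each $\varepsilon_i\in\{-1,1\}$.
   Context: $|N|=n_1+\cdots+n_k$. An $|N|\times|N|$ matrix $C=[C_{ij}]_{i,j=1}^k$, partitioned so that $C_{ij}$ is $n_i\times n_j$, is $N$-upper Toeplitz if each block has the following form: if $i\le j$, $C_{ij}=[\,0\ \ T_{ij}\,]$ where $T_{ij}$ is an $n_i\times n_i$ upper triangular Toeplitz matrix preceded by an $n_i\times(n_j-n_i)$ zero block; if $i>j$, $C_{ij}=\begin{bmatrix}T_{ij}\\0\end{bmatrix}$ where $T_{ij}$ is an $n_j\times n_j$ upper triangular Toeplitz matrix with an $(n_i-n_j)\times n_j$ zero block below it. (Equivalently, $C$ commutes with $J_{n_1}(0)\oplus\cdots\oplus J_{n_k}(0)$.) Let $P_n$ be the $n\times n$ reversal matrix (ones on the antidiagonal, zeros elsewhere) and $P_N=P_{n_1}\oplus\cdots\oplus P_{n_k}$. For an $N$-upper Toeplitz $X$, its $N$-block star is $X^{\maltese}:=P_NX^*P_N$ (again $N$-upper Toeplitz), and $X$ is $N$-Hermitian if $X^{\maltese}=X$. *)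

theory Defs
  imports Complex_Main "Jordan_Normal_Form.Matrix"
begin

text \<open>A block structure N = (n_1,...,n_k) is a list of positive naturals.
  Blocks are indexed 0..k-1; block i occupies global rows/cols
  blk_off N i .. blk_off N i + N!i - 1.\<close>

definition blk_size :: "nat list \<Rightarrow> nat" where
  "blk_size N = sum_list N"

definition blk_off :: "nat list \<Rightarrow> nat \<Rightarrow> nat" where
  "blk_off N i = sum_list (take i N)"

text \<open>For i \<le> j, block C_ij = [0 T_ij] with T_ij an n_i x n_i upper triangular Toeplitz
  matrix preceded by an n_i x (n_j - n_i) zero block: entry (r,c) equals
  t(c - r - (n_j - n_i)) if c \<ge> r + (n_j - n_i), else 0.
  For i > j, C_ij = [T_ij; 0] with T_ij an n_j x n_j upper triangular Toeplitz matrix: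
  entry (r,c) equals t(c - r) if c \<ge> r, else 0 (rows r \<ge> n_j automatically give 0).\<close>

definition N_upper_toeplitz :: "nat list \<Rightarrow> complex mat \<Rightarrow> bool" where
  "N_upper_toeplitz N C \<longleftrightarrow>
     C \<in> carrier_mat (blk_size N) (blk_size N) \<and>
     (\<forall>i < length N. \<forall>j < length N. \<exists>t :: nat \<Rightarrow> complex.
        \<forall>r < N!i. \<forall>c < N!j.
          C $$ (blk_off N i + r, blk_off N j + c) =
            (if i \<le> j then
               (if r + (N!j - N!i) \<le> c then t (c - r - (N!j - N!i)) else 0)
             else
               (if r \<le> c then t (c - r) else 0)))"

definition conj_tr :: "complex mat \<Rightarrow> complex mat" where
  "conj_tr X = mat (dim_col X) (dim_row X) (\<lambda>(p,q). cnj (X $$ (q,p)))"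

text \<open>P_N = P_{n_1} \<oplus> ... \<oplus> P_{n_k}, with P_n the n x n reversal matrix.\<close>
definition P_N :: "nat list \<Rightarrow> complex mat" where
  "P_N N = mat (blk_size N) (blk_size N) (\<lambda>(p,q).
     if \<exists>i < length N. \<exists>r < N!i. \<exists>c < N!i.
          p = blk_off N i + r \<and> q = blk_off N i + c \<and> r + c = N!i - 1
     then 1 else 0)"

definition blk_star :: "nat list \<Rightarrow> complex mat \<Rightarrow> complex mat" where
  "blk_star N X = P_N N * conj_tr X * P_N N"

definition N_hermitian :: "nat list \<Rightarrow> complex mat \<Rightarrow> bool" where
  "N_hermitian N X \<longleftrightarrow> blk_star N X = X"

text \<open>eps_1 I_{n_1} \<oplus> ... \<oplus> eps_k I_{n_k} (eps indexed by block, 0-based).\<close>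
definition sign_blkdiag :: "nat list \<Rightarrow> (nat \<Rightarrow> complex) \<Rightarrow> complex mat" where
  "sign_blkdiag N eps = mat (blk_size N) (blk_size N) (\<lambda>(p,q).
     if p = q then (\<Sum>i < length N. if blk_off N i \<le> p \<and> p < blk_off N (Suc i) then eps i else 0)
     else 0)"

end

theory Submission
  imports Defs "HOL-Computational_Algebra.Formal_Power_Series"
begin

fun dec :: "nat list \<Rightarrow> nat \<Rightarrow> nat \<times> nat" where
  "dec [] p = (0, p)"
| "dec (a # ns) p = (if p < a then (0, p) else (case dec ns (p - a) of (i, r) \<Rightarrow> (Suc i, r)))"

lemma dec_correct:
  "p < sum_list N \<Longrightarrow> fst (dec N p) < length N \<and> snd (dec N p) < N ! fst (dec N p)
     \<and> p = sum_list (take (fst (dec N p)) N) + snd (dec N p)"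
proof (induction N arbitrary: p)
  case Nil then show ?case by simp
next
  case (Cons a ns)
  show ?case
  proof (cases "p < a")
    case True then show ?thesis by simp
  next
    case False
    then have "p - a < sum_list ns" using Cons.prems by simp
    from Cons.IH[OF this] False show ?thesis
      by (auto split: prod.splits)
  qed
qed

lemma dec_off:
  "i < length N \<Longrightarrow> r < N ! i \<Longrightarrow> dec N (sum_list (take i N) + r) = (i, r)"
proof (induction N arbitrary: i)
  case Nil then show ?case by simp
next
  case (Cons a ns)
  show ?case
  proof (cases i)
    case 0 then show ?thesis using Cons.prems by simp
  next
    case (Suc j)
    then have "dec ns (sum_list (take j ns) + r) = (j, r)" using Cons by simp
    then show ?thesis using Suc by simp
  qed
qed

lemma off_bound: "i < length (N::nat list) \<Longrightarrow> r < N ! i \<Longrightarrow> sum_list (take i N) + r < sum_list N"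
proof (induction N arbitrary: i)
  case Nil then show ?case by simp
next
  case (Cons a ns)
  show ?case
  proof (cases i)
    case 0 then show ?thesis using Cons.prems by (simp add: trans_less_add1)
  next
    case (Suc j)
    then have "sum_list (take j ns) + r < sum_list ns" using Cons by simp
    then show ?thesis using Suc by simp
  qed
qed

locale blk =
  fixes N :: "nat list"
  assumes posN: "\<forall>i < length N. 1 \<le> N!i"
    and srt: "sorted N"
begin

abbreviation "n \<equiv> blk_size N"
abbreviation "nb \<equiv> length N"
definition bl :: "nat \<Rightarrow> nat" where "bl p = fst (dec N p)"
definition ps :: "nat \<Rightarrow> nat" where "ps p = snd (dec N p)"
abbreviation off :: "nat \<Rightarrow> nat" where "off i \<equiv> blk_off N i"
abbreviation sz :: "nat \<Rightarrow> nat" where "sz i \<equiv> N ! i"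

lemma dc: "p < n \<Longrightarrow> bl p < nb \<and> ps p < sz (bl p) \<and> p = off (bl p) + ps p"
  using dec_correct[of p N] unfolding bl_def ps_def blk_size_def blk_off_def by auto

lemma bl_off[simp]: "i < nb \<Longrightarrow> r < sz i \<Longrightarrow> bl (off i + r) = i"
  and ps_off[simp]: "i < nb \<Longrightarrow> r < sz i \<Longrightarrow> ps (off i + r) = r"
  using dec_off[of i N r] unfolding bl_def ps_def blk_off_def by auto

lemma off_lt[simp]: "i < nb \<Longrightarrow> r < sz i \<Longrightarrow> off i + r < n"
  using off_bound[of i N r] unfolding blk_off_def blk_size_def by auto

lemma bl_lt: "p < n \<Longrightarrow> bl p < nb" using dc by auto
lemma ps_lt: "p < n \<Longrightarrow> ps p < sz (bl p)" using dc by auto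
lemma p_eq: "p < n \<Longrightarrow> off (bl p) + ps p = p" using dc by auto

lemma sz_pos: "i < nb \<Longrightarrow> 0 < sz i" using posN by auto

lemma eq_iff: "p < n \<Longrightarrow> q < n \<Longrightarrow> (p = q) = (bl p = bl q \<and> ps p = ps q)"
  by (metis p_eq)

lemma off_sz: "i < nb \<Longrightarrow> off i < n" using off_lt[of i 0] sz_pos by auto

end

lemma mult_entry:
  "A \<in> carrier_mat nr m \<Longrightarrow> B \<in> carrier_mat m nc \<Longrightarrow> i < nr \<Longrightarrow> j < nc \<Longrightarrow>
   (A * B) $$ (i,j) = (\<Sum>s<m. A $$ (i,s) * B $$ (s,j))"
  by (simp add: scalar_prod_def atLeast0LessThan)

definition lshift :: "nat \<Rightarrow> nat \<Rightarrow> (nat \<Rightarrow> nat \<Rightarrow> complex) \<Rightarrow> bool" where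
  "lshift a b X \<longleftrightarrow> (\<forall>r<a. \<forall>c<b. (if 0<c then X r (c-1) else 0) = (if r+1<a then X (r+1) c else 0))"

lemma lshift_diag: "lshift a b X \<Longrightarrow> r+1<a \<Longrightarrow> c+1<b \<Longrightarrow> X r c = X (r+1) (c+1)"
  unfolding lshift_def by (drule spec[of _ r], auto dest: spec[of _ "c+1"])

lemma lshift_lastrow: "lshift a b X \<Longrightarrow> 0<a \<Longrightarrow> c+1<b \<Longrightarrow> X (a-1) c = 0"
  unfolding lshift_def by (drule spec[of _ "a-1"], auto dest: spec[of _ "c+1"])

lemma lshift_firstcol: "lshift a b X \<Longrightarrow> r+1<a \<Longrightarrow> 0<b \<Longrightarrow> X (r+1) 0 = 0"
  unfolding lshift_def by (drule spec[of _ r], auto dest: spec[of _ 0])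

lemma lshift_part1:
  assumes "lshift a b X"
  shows "r<a \<Longrightarrow> c<b \<Longrightarrow> r \<le> c \<Longrightarrow> X r c = X 0 (c-r)"
proof (induction r arbitrary: c)
  case 0 then show ?case by simp
next
  case (Suc r)
  have "X r (c-1) = X (r+1) (c-1+1)"
    using lshift_diag[OF assms, of r "c-1"] Suc.prems by auto
  moreover have "X r (c-1) = X 0 (c-1-r)" using Suc by auto
  ultimately show ?case using Suc.prems by (simp add: Suc_diff_le)
qed

lemma lshift_part2A:
  assumes "lshift a b X" "a \<le> b"
  shows "r<a \<Longrightarrow> c<b \<Longrightarrow> c < r + (b-a) \<Longrightarrow> X r c = 0"
proof (induction "a - 1 - r" arbitrary: r c)
  case 0
  then have "r = a - 1" by simp
  then show ?case using lshift_lastrow[OF assms(1), of c] 0 assms(2) by auto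
next
  case (Suc d)
  have "X r c = X (r+1) (c+1)" using lshift_diag[OF assms(1), of r c] Suc.prems Suc.hyps assms(2) by auto
  also have "\<dots> = 0" using Suc.hyps(1)[of "r+1" "c+1"] Suc.prems Suc.hyps(2) assms(2) by auto
  finally show ?case .
qed

lemma lshift_part2B:
  assumes "lshift a b X"
  shows "r<a \<Longrightarrow> c<b \<Longrightarrow> c < r \<Longrightarrow> X r c = 0"
proof (induction c arbitrary: r)
  case 0
  then show ?case using lshift_firstcol[OF assms, of "r-1"] by auto
next
  case (Suc c)
  have "X (r-1) c = X (r-1+1) (c+1)" using lshift_diag[OF assms, of "r-1" c] Suc.prems by auto
  moreover have "X (r-1) c = 0" using Suc by auto
  ultimately show ?case using Suc.prems by auto
qed

lemma tA:
  assumes "a \<le> b"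
  shows "lshift a b X \<longleftrightarrow> (\<exists>t. \<forall>r<a. \<forall>c<b. X r c = (if r + (b-a) \<le> c then t (c-r-(b-a)) else 0))"
proof
  assume h: "lshift a b X"
  show "\<exists>t. \<forall>r<a. \<forall>c<b. X r c = (if r + (b-a) \<le> c then t (c-r-(b-a)) else 0)"
  proof (intro exI allI impI)
    fix r c assume rc: "r < a" "c < b"
    show "X r c = (if r + (b-a) \<le> c then X 0 (c-r-(b-a) + (b-a)) else 0)"
      using lshift_part1[OF h rc] lshift_part2A[OF h assms rc] by auto
  qed
next
  assume "\<exists>t. \<forall>r<a. \<forall>c<b. X r c = (if r + (b-a) \<le> c then t (c-r-(b-a)) else 0)"
  then obtain t where t: "\<And>r c. r<a \<Longrightarrow> c<b \<Longrightarrow> X r c = (if r + (b-a) \<le> c then t (c-r-(b-a)) else 0)"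
    by blast
  show "lshift a b X" unfolding lshift_def
  proof (intro allI impI)
    fix r c assume rc: "r < a" "c < b"
    show "(if 0<c then X r (c-1) else 0) = (if r+1<a then X (r+1) c else 0)"
      using rc assms by (auto simp: t diff_diff_add)
  qed
qed

lemma tB:
  assumes "b \<le> a"
  shows "lshift a b X \<longleftrightarrow> (\<exists>t. \<forall>r<a. \<forall>c<b. X r c = (if r \<le> c then t (c-r) else 0))"
proof
  assume h: "lshift a b X"
  show "\<exists>t. \<forall>r<a. \<forall>c<b. X r c = (if r \<le> c then t (c-r) else 0)"
  proof (intro exI allI impI)
    fix r c assume rc: "r < a" "c < b"
    show "X r c = (if r \<le> c then X 0 (c-r) else 0)"
      using lshift_part1[OF h rc] lshift_part2B[OF h rc] by auto
  qed
next
  assume "\<exists>t. \<forall>r<a. \<forall>c<b. X r c = (if r \<le> c then t (c-r) else 0)"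
  then obtain t where t: "\<And>r c. r<a \<Longrightarrow> c<b \<Longrightarrow> X r c = (if r \<le> c then t (c-r) else 0)"
    by blast
  show "lshift a b X" unfolding lshift_def
  proof (intro allI impI)
    fix r c assume rc: "r < a" "c < b"
    show "(if 0<c then X r (c-1) else 0) = (if r+1<a then X (r+1) c else 0)"
      using rc assms by (auto simp: t diff_diff_add)
  qed
qed

context blk begin

definition gshift :: "complex mat \<Rightarrow> bool" where
  "gshift X \<longleftrightarrow> (\<forall>p<n. \<forall>q<n. (if 0 < ps q then X$$(p, q-1) else 0) =
                       (if ps p + 1 < sz (bl p) then X$$(p+1,q) else 0))"

lemma gshift_iff: "gshift X \<longleftrightarrow> (\<forall>i<nb. \<forall>j<nb. lshift (sz i) (sz j) (\<lambda>r c. X $$ (off i + r, off j + c)))"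
proof
  assume g: "gshift X"
  show "\<forall>i<nb. \<forall>j<nb. lshift (sz i) (sz j) (\<lambda>r c. X $$ (off i + r, off j + c))"
    unfolding lshift_def
  proof (intro allI impI)
    fix i j r c assume h: "i < nb" "j < nb" "r < sz i" "c < sz j"
    have F: "(if 0 < c then X$$(off i + r, off j + c - 1) else 0) = (if r + 1 < sz i then X$$(off i + r + 1, off j + c) else 0)"
      using g[unfolded gshift_def, rule_format, of "off i + r" "off j + c"] h by simp
    show "(if 0<c then X $$ (off i + r, off j + (c-1)) else 0) = (if r+1<sz i then X $$ (off i + (r+1), off j + c) else 0)"
    proof (cases "0 < c")
      case True
      then have "off j + (c-1) = off j + c - 1" by simp
      then show ?thesis using F True by (simp only: add.assoc)
    next
      case False
      then show ?thesis using F by auto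
    qed
  qed
next
  assume l: "\<forall>i<nb. \<forall>j<nb. lshift (sz i) (sz j) (\<lambda>r c. X $$ (off i + r, off j + c))"
  show "gshift X" unfolding gshift_def
  proof (intro allI impI)
    fix p q assume pq: "p < n" "q < n"
    have l1: "lshift (sz (bl p)) (sz (bl q)) (\<lambda>r c. X $$ (off (bl p) + r, off (bl q) + c))"
      using l bl_lt pq by auto
    have e1: "off (bl p) + ps p = p" "off (bl q) + ps q = q" using p_eq pq by auto
    have e2: "0 < ps q \<Longrightarrow> off (bl q) + (ps q - 1) = q - 1" using e1 by auto
    have e3: "off (bl p) + (ps p + 1) = p + 1" using e1 by auto
    show "(if 0 < ps q then X$$(p, q-1) else 0) = (if ps p + 1 < sz (bl p) then X$$(p+1,q) else 0)"
      using l1[unfolded lshift_def, rule_format, of "ps p" "ps q"] ps_lt pq e1 e2 e3 by auto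
  qed
qed

lemma toeplitz_iff: "N_upper_toeplitz N X \<longleftrightarrow> X \<in> carrier_mat n n \<and> gshift X"
proof -
  have "(\<exists>t :: nat \<Rightarrow> complex.
        \<forall>r < N!i. \<forall>c < N!j.
          X $$ (blk_off N i + r, blk_off N j + c) =
            (if i \<le> j then
               (if r + (N!j - N!i) \<le> c then t (c - r - (N!j - N!i)) else 0)
             else
               (if r \<le> c then t (c - r) else 0))) \<longleftrightarrow> lshift (sz i) (sz j) (\<lambda>r c. X $$ (off i + r, off j + c))"
    if ij: "i < nb" "j < nb" for i j
  proof (cases "i \<le> j")
    case True
    then have "sz i \<le> sz j" using sorted_nth_mono[OF srt True] ij by auto
    then show ?thesis using tA[of "sz i" "sz j"] True by simp
  next
    case False
    then have "sz j \<le> sz i" using sorted_nth_mono[OF srt, of j i] ij by auto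
    then show ?thesis using tB[of "sz j" "sz i"] False by simp
  qed
  then show ?thesis unfolding N_upper_toeplitz_def gshift_iff by auto
qed

definition Jm :: "complex mat" where
  "Jm = mat n n (\<lambda>(p,q). if q = Suc p \<and> bl q = bl p then 1 else 0)"

lemma Jm_carrier[simp]: "Jm \<in> carrier_mat n n" unfolding Jm_def by simp

lemma Jcond1: "s < n \<Longrightarrow> q < n \<Longrightarrow> (q = Suc s \<and> bl q = bl s) \<longleftrightarrow> (0 < ps q \<and> s = q - 1)"
proof
  assume h: "s < n" "q < n" "q = Suc s \<and> bl q = bl s"
  then have "off (bl q) + ps q = Suc (off (bl q) + ps s)" using p_eq[of q] p_eq[of s] by auto
  then show "0 < ps q \<and> s = q - 1" using h by auto
next
  assume h: "s < n" "q < n" "0 < ps q \<and> s = q - 1"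
  then have s: "s = off (bl q) + (ps q - 1)" using p_eq[of q] by auto
  have "ps q - 1 < sz (bl q)" using ps_lt[of q] h by auto
  then have "bl s = bl q" unfolding s using bl_off[of "bl q" "ps q - 1"] h bl_lt[of q] by blast
  moreover have "q = Suc s" using s h p_eq[of q] by auto
  ultimately show "q = Suc s \<and> bl q = bl s" by auto
qed

lemma Jcond2: "p < n \<Longrightarrow> s < n \<Longrightarrow> (s = Suc p \<and> bl s = bl p) \<longleftrightarrow> (ps p + 1 < sz (bl p) \<and> s = p + 1)"
proof
  assume h: "p < n" "s < n" "s = Suc p \<and> bl s = bl p"
  then have "off (bl p) + ps s = Suc (off (bl p) + ps p)" using p_eq[of p] p_eq[of s] by auto
  then show "ps p + 1 < sz (bl p) \<and> s = p + 1" using h ps_lt[of s] by auto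
next
  assume h: "p < n" "s < n" "ps p + 1 < sz (bl p) \<and> s = p + 1"
  then have s: "s = off (bl p) + (ps p + 1)" using p_eq[of p] by auto
  have "bl s = bl p" unfolding s using bl_off[of "bl p" "ps p + 1"] h bl_lt[of p] by blast
  then show "s = Suc p \<and> bl s = bl p" using h by auto
qed

lemma XJ_entry: "X \<in> carrier_mat n n \<Longrightarrow> p < n \<Longrightarrow> q < n \<Longrightarrow>
   (X * Jm) $$ (p,q) = (if 0 < ps q then X $$ (p, q-1) else 0)"
proof -
  assume h: "X \<in> carrier_mat n n" "p < n" "q < n"
  have "(X * Jm) $$ (p,q) = (\<Sum>s<n. X $$ (p,s) * Jm $$ (s,q))" using mult_entry[OF h(1) Jm_carrier h(2,3)] .
  also have "\<dots> = (\<Sum>s<n. if s = q - 1 then (if 0 < ps q then X $$ (p, s) else 0) else 0)"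
    by (rule sum.cong) (use h Jcond1 in \<open>auto simp: Jm_def\<close>)
  also have "\<dots> = (if 0 < ps q then X $$ (p, q-1) else 0)" using h by simp
  finally show ?thesis .
qed

lemma JX_entry: "X \<in> carrier_mat n n \<Longrightarrow> p < n \<Longrightarrow> q < n \<Longrightarrow>
   (Jm * X) $$ (p,q) = (if ps p + 1 < sz (bl p) then X $$ (p+1,q) else 0)"
proof -
  assume h: "X \<in> carrier_mat n n" "p < n" "q < n"
  have "(Jm * X) $$ (p,q) = (\<Sum>s<n. Jm $$ (p,s) * X $$ (s,q))" using mult_entry[OF Jm_carrier h(1) h(2,3)] .
  also have "\<dots> = (\<Sum>s<n. if s = p + 1 then (if ps p + 1 < sz (bl p) then X $$ (s, q) else 0) else 0)"
    by (rule sum.cong) (use h Jcond2 in \<open>auto simp: Jm_def\<close>)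
  also have "\<dots> = (if ps p + 1 < sz (bl p) then X $$ (p+1,q) else 0)"
    using h off_lt[of "bl p" "ps p + 1"] p_eq[of p] bl_lt[of p] by auto
  finally show ?thesis .
qed

lemma comm_iff: "X \<in> carrier_mat n n \<Longrightarrow> (X * Jm = Jm * X) \<longleftrightarrow> gshift X"
proof -
  assume X: "X \<in> carrier_mat n n"
  have c1: "X * Jm \<in> carrier_mat n n" "Jm * X \<in> carrier_mat n n"
    using mult_carrier_mat[OF X Jm_carrier] mult_carrier_mat[OF Jm_carrier X] by auto
  have "(X * Jm = Jm * X) \<longleftrightarrow> (\<forall>p<n. \<forall>q<n. (X * Jm) $$ (p,q) = (Jm * X) $$ (p,q))"
  proof
    assume a: "\<forall>p<n. \<forall>q<n. (X * Jm) $$ (p,q) = (Jm * X) $$ (p,q)"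
    show "X * Jm = Jm * X"
    proof (rule eq_matI)
      fix i j assume "i < dim_row (Jm * X)" "j < dim_col (Jm * X)"
      then have "i < n" "j < n" using c1 by auto
      then show "(X * Jm) $$ (i,j) = (Jm * X) $$ (i,j)" using a by blast
    qed (use carrier_matD[OF X] in \<open>auto simp: Jm_def\<close>)
  qed auto
  also have "\<dots> \<longleftrightarrow> gshift X" unfolding gshift_def using XJ_entry[OF X] JX_entry[OF X] by auto
  finally show ?thesis .
qed

end

lemma sum_delta_lt: "a < (m::nat) \<Longrightarrow> (\<Sum>s<m. if s = a then g s else 0) = g a"
  by simp

context blk begin

lemma prev_blk: "q < n \<Longrightarrow> 0 < ps q \<Longrightarrow> q - 1 < n \<and> bl (q-1) = bl q \<and> ps (q-1) = ps q - 1"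
proof -
  assume h: "q < n" "0 < ps q"
  have e: "q - 1 = off (bl q) + (ps q - 1)" using p_eq[OF h(1)] h(2) by auto
  have l: "bl q < nb" "ps q - 1 < sz (bl q)" using dc[OF h(1)] by auto
  show ?thesis unfolding e using l by simp
qed

lemma next_blk: "p < n \<Longrightarrow> ps p + 1 < sz (bl p) \<Longrightarrow> p + 1 < n \<and> bl (p+1) = bl p \<and> ps (p+1) = ps p + 1"
proof -
  assume h: "p < n" "ps p + 1 < sz (bl p)"
  have e: "p + 1 = off (bl p) + (ps p + 1)" using p_eq[OF h(1)] by auto
  have l: "bl p < nb" using dc[OF h(1)] by auto
  show ?thesis unfolding e using l h(2) by (simp del: One_nat_def)
qed

definition rho :: "nat \<Rightarrow> nat" where "rho p = off (bl p) + (sz (bl p) - 1 - ps p)"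

lemma rho_props: assumes "p < n"
  shows "rho p < n" "bl (rho p) = bl p" "ps (rho p) = sz (bl p) - 1 - ps p" "rho (rho p) = p"
proof -
  have h: "bl p < nb" "ps p < sz (bl p)" using dc assms by auto
  have s: "sz (bl p) - 1 - ps p < sz (bl p)" using h by auto
  show 1: "rho p < n" unfolding rho_def using off_lt h(1) s by blast
  show 2: "bl (rho p) = bl p" unfolding rho_def using bl_off h(1) s by blast
  show 3: "ps (rho p) = sz (bl p) - 1 - ps p" unfolding rho_def using ps_off h(1) s by blast
  have "rho (rho p) = off (bl p) + (sz (bl p) - 1 - (sz (bl p) - 1 - ps p))"
    unfolding rho_def[of "rho p"] 2 3 by simp
  also have "\<dots> = p" using h p_eq[OF assms] by auto
  finally show "rho (rho p) = p" .
qed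

lemma rho_eq: "t < n \<Longrightarrow> q < n \<Longrightarrow> (q = rho t) = (t = rho q)"
  using rho_props(4) by metis

lemma sum_rho: "(\<Sum>s<n. g (rho s)) = (\<Sum>s<n. g s)"
  by (rule sum.reindex_bij_witness[of _ rho rho]) (auto simp: rho_props)

lemma P_carrier[simp]: "P_N N \<in> carrier_mat n n" unfolding P_N_def by simp

lemma P_entry: assumes pq: "p < n" "q < n"
  shows "P_N N $$ (p,q) = (if q = rho p then 1 else 0)"
proof -
  have "(\<exists>i < length N. \<exists>r < N!i. \<exists>c < N!i. p = blk_off N i + r \<and> q = blk_off N i + c \<and> r + c = N!i - 1) \<longleftrightarrow> q = rho p"
  proof
    assume "\<exists>i < length N. \<exists>r < N!i. \<exists>c < N!i. p = blk_off N i + r \<and> q = blk_off N i + c \<and> r + c = N!i - 1"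
    then obtain i r c where h: "i < nb" "r < sz i" "c < sz i" "p = off i + r" "q = off i + c" "r + c = sz i - 1" by blast
    then have "bl p = i" "ps p = r" by auto
    then show "q = rho p" unfolding rho_def using h by auto
  next
    assume q: "q = rho p"
    have "bl p < nb \<and> ps p < sz (bl p) \<and> sz (bl p) - 1 - ps p < sz (bl p) \<and> p = off (bl p) + ps p
       \<and> q = off (bl p) + (sz (bl p) - 1 - ps p) \<and> ps p + (sz (bl p) - 1 - ps p) = sz (bl p) - 1"
      using dc[OF pq(1)] q unfolding rho_def by auto
    then show "\<exists>i < length N. \<exists>r < N!i. \<exists>c < N!i. p = blk_off N i + r \<and> q = blk_off N i + c \<and> r + c = N!i - 1"
      by blast
  qed
  then show ?thesis unfolding P_N_def using pq by simp
qed

lemma conj_tr_carrier[simp]: "X \<in> carrier_mat a b \<Longrightarrow> conj_tr X \<in> carrier_mat b a"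
  unfolding conj_tr_def carrier_mat_def by simp

lemma conj_tr_entry: "X \<in> carrier_mat a b \<Longrightarrow> p < b \<Longrightarrow> q < a \<Longrightarrow> conj_tr X $$ (p,q) = cnj (X $$ (q,p))"
  unfolding conj_tr_def carrier_mat_def by simp

lemma P_dims[simp]: "dim_row (P_N N) = n" "dim_col (P_N N) = n" unfolding P_N_def by simp_all

lemma star_carrier[simp]: "blk_star N X \<in> carrier_mat n n"
  unfolding blk_star_def carrier_mat_def by simp

lemma star_dims[simp]: "dim_row (blk_star N X) = n" "dim_col (blk_star N X) = n"
  unfolding blk_star_def by simp_all

lemma star_entry: assumes X: "X \<in> carrier_mat n n" and pq: "p < n" "q < n"
  shows "blk_star N X $$ (p,q) = cnj (X $$ (rho q, rho p))"
proof -
  have P: "P_N N \<in> carrier_mat n n" by simp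
  have Y: "conj_tr X \<in> carrier_mat n n" using X by simp
  have PY: "P_N N * conj_tr X \<in> carrier_mat n n" using mult_carrier_mat[OF P Y] .
  have e1: "(P_N N * conj_tr X) $$ (p,t) = cnj (X $$ (t, rho p))" if t: "t < n" for t
  proof -
    have "(P_N N * conj_tr X) $$ (p,t) = (\<Sum>s<n. P_N N $$ (p,s) * conj_tr X $$ (s,t))"
      using mult_entry[OF P Y pq(1) t] .
    also have "\<dots> = (\<Sum>s<n. if s = rho p then conj_tr X $$ (s,t) else 0)"
      by (rule sum.cong) (auto simp: P_entry pq)
    also have "\<dots> = conj_tr X $$ (rho p, t)" using rho_props(1)[OF pq(1)] by simp
    also have "\<dots> = cnj (X $$ (t, rho p))" using conj_tr_entry[OF X] t rho_props(1)[OF pq(1)] by auto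
    finally show ?thesis .
  qed
  have "blk_star N X $$ (p,q) = (\<Sum>t<n. (P_N N * conj_tr X) $$ (p,t) * P_N N $$ (t,q))"
    unfolding blk_star_def using mult_entry[OF PY P pq] .
  also have "\<dots> = (\<Sum>t<n. if t = rho q then cnj (X $$ (t, rho p)) else 0)"
  proof (rule sum.cong)
    fix t assume "t \<in> {..<n}"
    then have t: "t < n" by simp
    show "(P_N N * conj_tr X) $$ (p,t) * P_N N $$ (t,q) = (if t = rho q then cnj (X $$ (t, rho p)) else 0)"
      using rho_eq[OF t pq(2)] by (simp add: P_entry t pq e1)
  qed simp
  also have "\<dots> = cnj (X $$ (rho q, rho p))" using rho_props(1)[OF pq(2)] by simp
  finally show ?thesis .
qed

abbreviation star :: "complex mat \<Rightarrow> complex mat" where "star X \<equiv> blk_star N X"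

lemma star_star: assumes "X \<in> carrier_mat n n" shows "star (star X) = X"
proof (rule eq_matI)
  fix p q assume "p < dim_row X" "q < dim_col X"
  then have pq: "p < n" "q < n" using assms by auto
  show "star (star X) $$ (p,q) = X $$ (p,q)"
    using star_entry[OF star_carrier pq] star_entry[OF assms rho_props(1)[OF pq(2)] rho_props(1)[OF pq(1)]]
      rho_props(4) pq by simp
qed (use assms in auto)

lemma star_mult: assumes X: "X \<in> carrier_mat n n" and Y: "Y \<in> carrier_mat n n"
  shows "star (X * Y) = star Y * star X"
proof (rule eq_matI)
  fix p q assume "p < dim_row (star Y * star X)" "q < dim_col (star Y * star X)"
  then have pq: "p < n" "q < n" by auto
  have XY: "X * Y \<in> carrier_mat n n" using X Y by simp
  have "star (X * Y) $$ (p,q) = cnj (\<Sum>s<n. X $$ (rho q, s) * Y $$ (s, rho p))"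
    using star_entry[OF XY pq] mult_entry[OF X Y rho_props(1)[OF pq(2)] rho_props(1)[OF pq(1)]] by simp
  also have "\<dots> = (\<Sum>s<n. cnj (Y $$ (s, rho p)) * cnj (X $$ (rho q, s)))"
    by (simp add: mult.commute)
  also have "\<dots> = (\<Sum>s<n. cnj (Y $$ (rho s, rho p)) * cnj (X $$ (rho q, rho s)))"
    using sum_rho[of "\<lambda>s. cnj (Y $$ (s, rho p)) * cnj (X $$ (rho q, s))"] by simp
  also have "\<dots> = (\<Sum>s<n. star Y $$ (p, s) * star X $$ (s, q))"
    by (rule sum.cong) (auto simp: star_entry X Y pq)
  also have "\<dots> = (star Y * star X) $$ (p,q)" using mult_entry[OF star_carrier star_carrier pq] by simp
  finally show "(star (X * Y)) $$ (p,q) = (star Y * star X) $$ (p,q)" .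
qed (auto simp: carrier_matD)

lemma star_add: assumes "X \<in> carrier_mat n n" "Y \<in> carrier_mat n n" shows "star (X + Y) = star X + star Y"
proof (rule eq_matI)
  fix p q assume "p < dim_row (star X + star Y)" "q < dim_col (star X + star Y)"
  then have pq: "p < n" "q < n" by auto
  have c: "X + Y \<in> carrier_mat n n" using assms by simp
  show "star (X + Y) $$ (p,q) = (star X + star Y) $$ (p,q)"
    using star_entry[OF c pq] star_entry[OF assms(1) pq] star_entry[OF assms(2) pq] pq rho_props(1) assms by simp
qed auto

lemma star_smult: assumes "X \<in> carrier_mat n n" shows "star (a \<cdot>\<^sub>m X) = cnj a \<cdot>\<^sub>m star X"
proof (rule eq_matI)
  fix p q assume "p < dim_row (cnj a \<cdot>\<^sub>m star X)" "q < dim_col (cnj a \<cdot>\<^sub>m star X)"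
  then have pq: "p < n" "q < n" by auto
  have c: "a \<cdot>\<^sub>m X \<in> carrier_mat n n" using assms by simp
  show "star (a \<cdot>\<^sub>m X) $$ (p,q) = (cnj a \<cdot>\<^sub>m star X) $$ (p,q)"
    using star_entry[OF c pq] star_entry[OF assms(1) pq] pq rho_props(1) assms by simp
qed auto

lemma star_one: "star (1\<^sub>m n) = 1\<^sub>m n"
proof (rule eq_matI)
  fix p q assume "p < dim_row (1\<^sub>m n :: complex mat)" "q < dim_col (1\<^sub>m n :: complex mat)"
  then have pq: "p < n" "q < n" by auto
  have "(rho q = rho p) = (p = q)" using rho_props(4) pq by metis
  then show "star (1\<^sub>m n) $$ (p,q) = 1\<^sub>m n $$ (p,q)"
    using star_entry[OF one_carrier_mat pq] pq rho_props(1) by simp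
qed auto

definition Am :: "complex mat \<Rightarrow> bool" where
  "Am X \<longleftrightarrow> X \<in> carrier_mat n n \<and> X * Jm = Jm * X"

lemma Am_carrier: "Am X \<Longrightarrow> X \<in> carrier_mat n n" unfolding Am_def by auto

lemma Am_gshift: "Am X \<longleftrightarrow> X \<in> carrier_mat n n \<and> gshift X"
  unfolding Am_def using comm_iff by auto

lemma Am_mult: assumes "Am X" "Am Y" shows "Am (X * Y)"
proof -
  have c: "X \<in> carrier_mat n n" "Y \<in> carrier_mat n n" and e: "X * Jm = Jm * X" "Y * Jm = Jm * Y"
    using assms unfolding Am_def by auto
  have "X * Y * Jm = X * (Y * Jm)" using assoc_mult_mat[OF c Jm_carrier] .
  also have "\<dots> = X * (Jm * Y)" using e by simp
  also have "\<dots> = (X * Jm) * Y" using assoc_mult_mat[OF c(1) Jm_carrier c(2)] by simp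
  also have "\<dots> = Jm * X * Y" using e by simp
  also have "\<dots> = Jm * (X * Y)" using assoc_mult_mat[OF Jm_carrier c] .
  finally show ?thesis unfolding Am_def using mult_carrier_mat[OF c] by simp
qed

lemma Am_add: assumes "Am X" "Am Y" shows "Am (X + Y)"
proof -
  have c: "X \<in> carrier_mat n n" "Y \<in> carrier_mat n n" and e: "X * Jm = Jm * X" "Y * Jm = Jm * Y"
    using assms unfolding Am_def by auto
  have "(X + Y) * Jm = X * Jm + Y * Jm" using add_mult_distrib_mat[OF c Jm_carrier] .
  also have "\<dots> = Jm * X + Jm * Y" using e by simp
  also have "\<dots> = Jm * (X + Y)" using mult_add_distrib_mat[OF Jm_carrier c] by simp
  finally show ?thesis unfolding Am_def using c by simp
qed

lemma Am_smult: assumes "Am X" shows "Am (a \<cdot>\<^sub>m X)"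
proof -
  have c: "X \<in> carrier_mat n n" and e: "X * Jm = Jm * X"
    using assms unfolding Am_def by auto
  have "(a \<cdot>\<^sub>m X) * Jm = a \<cdot>\<^sub>m (X * Jm)" using mult_smult_assoc_mat[OF c Jm_carrier] .
  also have "\<dots> = a \<cdot>\<^sub>m (Jm * X)" using e by simp
  also have "\<dots> = Jm * (a \<cdot>\<^sub>m X)" using mult_smult_distrib[OF Jm_carrier c] by simp
  finally show ?thesis unfolding Am_def using c by simp
qed

lemma Jm_dims[simp]: "dim_row Jm = n" "dim_col Jm = n" unfolding Jm_def by simp_all

lemma Am_one: "Am (1\<^sub>m n)" unfolding Am_def by simp

lemma Am_star: assumes "Am X" shows "Am (star X)"
proof -
  have c: "X \<in> carrier_mat n n" and g: "gshift X" using assms Am_gshift by auto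
  have "gshift (star X)" unfolding gshift_def
  proof (intro allI impI)
    fix p q assume pq: "p < n" "q < n"
    let ?p' = "rho q" and ?q' = "rho p"
    have pq': "?p' < n" "?q' < n" using rho_props pq by auto
    have G: "(if 0 < ps ?q' then X$$(?p', ?q'-1) else 0) = (if ps ?p' + 1 < sz (bl ?p') then X$$(?p'+1,?q') else 0)"
      using g pq' unfolding gshift_def by blast
    have c1: "0 < ps ?q' \<longleftrightarrow> ps p + 1 < sz (bl p)" using rho_props[OF pq(1)] dc[OF pq(1)] by auto
    have c2: "ps ?p' + 1 < sz (bl ?p') \<longleftrightarrow> 0 < ps q" using rho_props[OF pq(2)] dc[OF pq(2)] by auto
    have r1: "ps p + 1 < sz (bl p) \<Longrightarrow> ?q' - 1 = rho (p+1) \<and> p + 1 < n"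
    proof -
      assume a: "ps p + 1 < sz (bl p)"
      note nb = next_blk[OF pq(1) a]
      show ?thesis using nb a unfolding rho_def by auto
    qed
    have r2: "0 < ps q \<Longrightarrow> ?p' + 1 = rho (q-1) \<and> q - 1 < n"
    proof -
      assume a: "0 < ps q"
      note pb = prev_blk[OF pq(2) a]
      show ?thesis using pb a ps_lt[OF pq(2)] unfolding rho_def by auto
    qed
    show "(if 0 < ps q then star X $$ (p, q-1) else 0) = (if ps p + 1 < sz (bl p) then star X $$ (p+1,q) else 0)"
    proof (cases "0 < ps q"; cases "ps p + 1 < sz (bl p)")
      assume a: "0 < ps q" "ps p + 1 < sz (bl p)"
      then show ?thesis using G c1 c2 r1 r2 pq by (simp add: star_entry c)
    next
      assume a: "0 < ps q" "\<not> ps p + 1 < sz (bl p)"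
      then show ?thesis using G c1 c2 r1 r2 pq by (simp add: star_entry c)
    next
      assume a: "\<not> 0 < ps q" "ps p + 1 < sz (bl p)"
      then show ?thesis using G c1 c2 r1 r2 pq by (simp add: star_entry c)
    next
      assume a: "\<not> 0 < ps q" "\<not> ps p + 1 < sz (bl p)"
      then show ?thesis by simp
    qed
  qed
  then show ?thesis using Am_gshift by simp
qed

end

context blk begin

lemma Jm_entry: "p < n \<Longrightarrow> q < n \<Longrightarrow> Jm $$ (p,q) = (if q = Suc p \<and> bl q = bl p then 1 else 0)"
  unfolding Jm_def by simp

definition Dg :: "(nat \<Rightarrow> complex) \<Rightarrow> complex mat" where
  "Dg f = mat n n (\<lambda>(p,q). if p = q then f (bl p) else 0)"

lemma Dg_carrier[simp]: "Dg f \<in> carrier_mat n n" unfolding Dg_def by simp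
lemma Dg_dims[simp]: "dim_row (Dg f) = n" "dim_col (Dg f) = n" unfolding Dg_def by simp_all
lemma Dg_entry: "p < n \<Longrightarrow> q < n \<Longrightarrow> Dg f $$ (p,q) = (if p = q then f (bl p) else 0)"
  unfolding Dg_def by simp

lemma Dg_mult_left: assumes X: "X \<in> carrier_mat n n" and pq: "p < n" "q < n"
  shows "(Dg f * X) $$ (p,q) = f (bl p) * X $$ (p,q)"
proof -
  have "(Dg f * X) $$ (p,q) = (\<Sum>s<n. Dg f $$ (p,s) * X $$ (s,q))" using mult_entry[OF Dg_carrier X pq] .
  also have "\<dots> = (\<Sum>s<n. if s = p then f (bl p) * X $$ (s,q) else 0)"
    by (rule sum.cong) (auto simp: Dg_entry pq)
  also have "\<dots> = f (bl p) * X $$ (p,q)" using pq by simp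
  finally show ?thesis .
qed

lemma Dg_mult_right: assumes X: "X \<in> carrier_mat n n" and pq: "p < n" "q < n"
  shows "(X * Dg f) $$ (p,q) = X $$ (p,q) * f (bl q)"
proof -
  have "(X * Dg f) $$ (p,q) = (\<Sum>s<n. X $$ (p,s) * Dg f $$ (s,q))" using mult_entry[OF X Dg_carrier pq] .
  also have "\<dots> = (\<Sum>s<n. if s = q then X $$ (p,s) * f (bl q) else 0)"
    by (rule sum.cong) (auto simp: Dg_entry pq)
  also have "\<dots> = X $$ (p,q) * f (bl q)" using pq by simp
  finally show ?thesis .
qed

lemma Am_Dg: "Am (Dg f)"
  unfolding Am_def
proof (intro conjI Dg_carrier eq_matI)
  fix p q assume "p < dim_row (Jm * Dg f)" "q < dim_col (Jm * Dg f)"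
  then have pq: "p < n" "q < n" by auto
  show "(Dg f * Jm) $$ (p,q) = (Jm * Dg f) $$ (p,q)"
    using Dg_mult_left[OF Jm_carrier pq] Dg_mult_right[OF Jm_carrier pq] Jm_entry[OF pq] by auto
qed auto

lemma Dg_Dg: "Dg f * Dg g = Dg (\<lambda>i. f i * g i)"
proof (rule eq_matI)
  fix p q assume "p < dim_row (Dg (\<lambda>i. f i * g i))" "q < dim_col (Dg (\<lambda>i. f i * g i))"
  then have pq: "p < n" "q < n" by auto
  show "(Dg f * Dg g) $$ (p,q) = Dg (\<lambda>i. f i * g i) $$ (p,q)"
    using Dg_mult_left[OF Dg_carrier pq] by (simp add: Dg_entry pq)
qed auto

lemma Dg_add: "Dg f + Dg g = Dg (\<lambda>i. f i + g i)"
  by (rule eq_matI) (auto simp: Dg_entry)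

lemma Dg_one: "Dg (\<lambda>i. 1) = 1\<^sub>m n"
  by (rule eq_matI) (auto simp: Dg_entry)

lemma star_Dg: "star (Dg f) = Dg (\<lambda>i. cnj (f i))"
proof (rule eq_matI)
  fix p q assume "p < dim_row (Dg (\<lambda>i. cnj (f i)))" "q < dim_col (Dg (\<lambda>i. cnj (f i)))"
  then have pq: "p < n" "q < n" by auto
  have "(rho q = rho p) = (p = q)" using rho_props(4) pq by metis
  then show "star (Dg f) $$ (p,q) = Dg (\<lambda>i. cnj (f i)) $$ (p,q)"
    using star_entry[OF Dg_carrier pq] pq rho_props by (auto simp: Dg_entry)
qed auto

lemma sign_eq: "sign_blkdiag N eps = Dg eps"
proof (rule eq_matI)
  fix p q assume "p < dim_row (Dg eps)" "q < dim_col (Dg eps)"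
  then have pq: "p < n" "q < n" by auto
  have "(\<Sum>i < length N. if blk_off N i \<le> p \<and> p < blk_off N (Suc i) then eps i else 0)
      = (\<Sum>i < nb. if i = bl p then eps i else 0)"
  proof (rule sum.cong)
    fix i assume "i \<in> {..<nb}"
    then have i: "i < nb" by simp
    have os: "blk_off N (Suc i) = off i + sz i" unfolding blk_off_def using i by (simp add: take_Suc_conv_app_nth)
    have "(off i \<le> p \<and> p < off i + sz i) \<longleftrightarrow> i = bl p"
    proof
      assume a: "off i \<le> p \<and> p < off i + sz i"
      then have "p = off i + (p - off i)" "p - off i < sz i" by auto
      then show "i = bl p" using bl_off[OF i] by metis
    next
      assume "i = bl p" then show "off i \<le> p \<and> p < off i + sz i" using dc[OF pq(1)] by auto
    qed
    then show "(if blk_off N i \<le> p \<and> p < blk_off N (Suc i) then eps i else 0) = (if i = bl p then eps i else 0)"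
      using os by simp
  qed simp
  also have "\<dots> = eps (bl p)" using bl_lt[OF pq(1)] by simp
  finally show "sign_blkdiag N eps $$ (p,q) = Dg eps $$ (p,q)"
    unfolding sign_blkdiag_def using pq by (auto simp: Dg_entry)
qed (auto simp: sign_blkdiag_def)

definition form :: "nat set \<Rightarrow> (nat \<Rightarrow> complex) \<Rightarrow> complex mat \<Rightarrow> bool" where
  "form B f X \<longleftrightarrow> (\<forall>p<n. \<forall>q<n. \<not> (bl p \<in> B \<and> bl q \<in> B) \<longrightarrow> X $$ (p,q) = (if p = q then f (bl p) else 0))"

lemma form_cong: "form B f X \<Longrightarrow> (\<And>i. i \<notin> B \<Longrightarrow> f i = g i) \<Longrightarrow> form B g X"
  unfolding form_def by auto

lemma form_mult: assumes X: "X \<in> carrier_mat n n" and Y: "Y \<in> carrier_mat n n"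
  and fX: "form B f X" and fY: "form B g Y"
  shows "form B (\<lambda>i. f i * g i) (X * Y)"
  unfolding form_def
proof (intro allI impI)
  fix p q assume pq: "p < n" "q < n" and nb: "\<not> (bl p \<in> B \<and> bl q \<in> B)"
  have m: "(X * Y) $$ (p,q) = (\<Sum>s<n. X $$ (p,s) * Y $$ (s,q))" using mult_entry[OF X Y pq] .
  show "(X * Y) $$ (p,q) = (if p = q then f (bl p) * g (bl p) else 0)"
  proof (cases "bl q \<in> B")
    case False
    have "(\<Sum>s<n. X $$ (p,s) * Y $$ (s,q)) = (\<Sum>s<n. if s = q then X $$ (p,s) * g (bl q) else 0)"
      by (rule sum.cong) (use fY False pq in \<open>auto simp: form_def\<close>)
    also have "\<dots> = X $$ (p,q) * g (bl q)" using pq by simp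
    also have "\<dots> = (if p = q then f (bl p) * g (bl p) else 0)" using fX False pq unfolding form_def by auto
    finally show ?thesis using m by simp
  next
    case True
    then have F: "bl p \<notin> B" using nb by auto
    have "(\<Sum>s<n. X $$ (p,s) * Y $$ (s,q)) = (\<Sum>s<n. if s = p then f (bl p) * Y $$ (s,q) else 0)"
      by (rule sum.cong) (use fX F pq in \<open>auto simp: form_def\<close>)
    also have "\<dots> = f (bl p) * Y $$ (p,q)" using pq by simp
    also have "\<dots> = (if p = q then f (bl p) * g (bl p) else 0)" using fY F pq unfolding form_def by auto
    finally show ?thesis using m by simp
  qed
qed

lemma form_add: "X \<in> carrier_mat n n \<Longrightarrow> Y \<in> carrier_mat n n \<Longrightarrow> form B f X \<Longrightarrow> form B g Y \<Longrightarrow>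
   form B (\<lambda>i. f i + g i) (X + Y)"
  unfolding form_def by auto

lemma form_smult: "X \<in> carrier_mat n n \<Longrightarrow> form B f X \<Longrightarrow> form B (\<lambda>i. a * f i) (a \<cdot>\<^sub>m X)"
  unfolding form_def by auto

lemma form_Dg: "form B f (Dg f)"
  unfolding form_def by (auto simp: Dg_entry)

lemma form_one: "form B (\<lambda>i. 1) (1\<^sub>m n)"
  unfolding form_def by auto

lemma form_star: assumes X: "X \<in> carrier_mat n n" and f: "form B f X"
  shows "form B (\<lambda>i. cnj (f i)) (star X)"
  unfolding form_def
proof (intro allI impI)
  fix p q assume pq: "p < n" "q < n" and nb: "\<not> (bl p \<in> B \<and> bl q \<in> B)"
  have r: "rho q < n" "rho p < n" "bl (rho q) = bl q" "bl (rho p) = bl p" using rho_props pq by auto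
  have e: "(rho q = rho p) = (p = q)" using rho_props(4) pq by metis
  have "X $$ (rho q, rho p) = (if rho q = rho p then f (bl (rho q)) else 0)"
    using f r nb unfolding form_def by auto
  then show "star X $$ (p,q) = (if p = q then cnj (f (bl p)) else 0)"
    using star_entry[OF X pq] e r by auto
qed

lemma form_empty: "X \<in> carrier_mat n n \<Longrightarrow> form {} f X \<Longrightarrow> X = Dg f"
  by (rule eq_matI) (auto simp: form_def Dg_entry)

end

context blk begin

definition Fm :: "nat \<Rightarrow> nat \<Rightarrow> complex mat" where
  "Fm l k = mat n n (\<lambda>(p,q). if bl p = l \<and> bl q = k \<and> ps p = ps q then 1 else 0)"

lemma Fm_carrier[simp]: "Fm l k \<in> carrier_mat n n" unfolding Fm_def by simp
lemma Fm_dims[simp]: "dim_row (Fm l k) = n" "dim_col (Fm l k) = n" unfolding Fm_def by simp_all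
lemma Fm_entry: "p < n \<Longrightarrow> q < n \<Longrightarrow> Fm l k $$ (p,q) = (if bl p = l \<and> bl q = k \<and> ps p = ps q then 1 else 0)"
  unfolding Fm_def by simp

lemma Am_Fm: assumes sz: "sz l = sz k" shows "Am (Fm l k)"
  unfolding Am_def
proof (intro conjI Fm_carrier eq_matI)
  fix p q assume "p < dim_row (Jm * Fm l k)" "q < dim_col (Jm * Fm l k)"
  then have pq: "p < n" "q < n" by auto
  let ?C = "bl p = l \<and> bl q = k \<and> ps p + 1 = ps q"
  have A: "0 < ps q \<Longrightarrow> Fm l k $$ (p,q-1) = (if ?C then 1 else 0)"
    using prev_blk[OF pq(2)] by (auto simp: Fm_entry pq)
  have B: "ps p + 1 < sz (bl p) \<Longrightarrow> Fm l k $$ (p+1,q) = (if ?C then 1 else 0)"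
    using next_blk[OF pq(1)] by (auto simp: Fm_entry pq)
  have C: "?C \<Longrightarrow> 0 < ps q \<and> ps p + 1 < sz (bl p)" using ps_lt[OF pq(2)] sz by auto
  show "(Fm l k * Jm) $$ (p,q) = (Jm * Fm l k) $$ (p,q)"
    unfolding XJ_entry[OF Fm_carrier pq] JX_entry[OF Fm_carrier pq]
    using A B C by auto
qed auto

lemma form_Fm: "l \<in> B \<Longrightarrow> k \<in> B \<Longrightarrow> form B (\<lambda>i. 0) (Fm l k)"
  unfolding form_def by (auto simp: Fm_entry)

lemma Fm_sq: assumes "l \<noteq> k" shows "Fm l k * Fm l k = 0\<^sub>m n n"
proof (rule eq_matI)
  fix p q assume "p < dim_row (0\<^sub>m n n :: complex mat)" "q < dim_col (0\<^sub>m n n :: complex mat)"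
  then have pq: "p < n" "q < n" by auto
  have "(Fm l k * Fm l k) $$ (p,q) = (\<Sum>s<n. Fm l k $$ (p,s) * Fm l k $$ (s,q))"
    using mult_entry[OF Fm_carrier Fm_carrier pq] .
  also have "\<dots> = 0" by (rule sum.neutral) (use assms pq in \<open>auto simp: Fm_entry\<close>)
  finally show "(Fm l k * Fm l k) $$ (p,q) = 0\<^sub>m n n $$ (p,q)" using pq by simp
qed auto

lemma blk_start: "t < n \<Longrightarrow> l < nb \<Longrightarrow> (bl t = l \<and> ps t = 0) \<longleftrightarrow> t = off l"
  using p_eq[of t] bl_off[of l 0] ps_off[of l 0] sz_pos[of l] by auto

lemma Fm_col: assumes "l < nb" "k < nb" "t < n"
  shows "Fm l k $$ (t, off k) = (if t = off l then 1 else 0)"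
proof -
  have "bl (off k) = k" "ps (off k) = 0" using bl_off[of k 0] ps_off[of k 0] sz_pos assms by auto
  then show ?thesis using Fm_entry[OF assms(3) off_sz[OF assms(2)]] blk_start[OF assms(3,1)] by auto
qed

lemma star_Fm_row: assumes sz: "sz l = sz k" and lk: "l < nb" "k < nb" and s: "s < n"
  shows "star (Fm l k) $$ (off k, s) = (if s = off l then 1 else 0)"
proof -
  have ok: "off k < n" "bl (off k) = k" "ps (off k) = 0" using bl_off[of k 0] ps_off[of k 0] sz_pos lk off_sz by auto
  have r: "bl (rho (off k)) = k" "ps (rho (off k)) = sz k - 1" using rho_props[OF ok(1)] ok by auto
  have r2: "bl (rho s) = bl s" "ps (rho s) = sz (bl s) - 1 - ps s" "rho s < n" "rho (off k) < n"
    using rho_props s ok by auto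
  have "(bl s = l \<and> sz (bl s) - 1 - ps s = sz k - 1) \<longleftrightarrow> (bl s = l \<and> ps s = 0)"
    using ps_lt[OF s] sz sz_pos lk by auto
  then show ?thesis
    using star_entry[OF Fm_carrier ok(1) s] Fm_entry[OF r2(3,4)] r r2 blk_start[OF s lk(1)] by auto
qed

definition Toe :: "nat \<Rightarrow> complex fps \<Rightarrow> complex mat" where
  "Toe k s = mat n n (\<lambda>(p,q). if bl p = k \<and> bl q = k \<and> ps p \<le> ps q then fps_nth s (ps q - ps p) else 0)"

lemma Toe_carrier[simp]: "Toe k s \<in> carrier_mat n n" unfolding Toe_def by simp
lemma Toe_dims[simp]: "dim_row (Toe k s) = n" "dim_col (Toe k s) = n" unfolding Toe_def by simp_all
lemma Toe_entry: "p < n \<Longrightarrow> q < n \<Longrightarrow> Toe k s $$ (p,q) = (if bl p = k \<and> bl q = k \<and> ps p \<le> ps q then fps_nth s (ps q - ps p) else 0)"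
  unfolding Toe_def by simp

lemma Am_Toe: "Am (Toe k s)"
  unfolding Am_def
proof (intro conjI Toe_carrier eq_matI)
  fix p q assume "p < dim_row (Jm * Toe k s)" "q < dim_col (Jm * Toe k s)"
  then have pq: "p < n" "q < n" by auto
  let ?C = "bl p = k \<and> bl q = k \<and> ps p < ps q"
  have A: "0 < ps q \<Longrightarrow> Toe k s $$ (p,q-1) = (if ?C then fps_nth s (ps q - 1 - ps p) else 0)"
    using prev_blk[OF pq(2)] by (auto simp: Toe_entry pq)
  have B: "ps p + 1 < sz (bl p) \<Longrightarrow> Toe k s $$ (p+1,q) = (if ?C then fps_nth s (ps q - 1 - ps p) else 0)"
    using next_blk[OF pq(1)] by (auto simp: Toe_entry pq)
  have C: "?C \<Longrightarrow> 0 < ps q \<and> ps p + 1 < sz (bl p)" using ps_lt[OF pq(2)] by auto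
  show "(Toe k s * Jm) $$ (p,q) = (Jm * Toe k s) $$ (p,q)"
    unfolding XJ_entry[OF Toe_carrier pq] JX_entry[OF Toe_carrier pq]
    using A B C by auto
qed auto

lemma form_Toe: "k \<in> B \<Longrightarrow> form B (\<lambda>i. 0) (Toe k s)"
  unfolding form_def by (auto simp: Toe_entry)

lemma sum_blk: assumes k: "k < nb" and z: "\<And>t. t < n \<Longrightarrow> bl t \<noteq> k \<Longrightarrow> g t = 0"
  shows "(\<Sum>t<n. g t) = (\<Sum>c<sz k. g (off k + c))"
proof -
  have "(\<Sum>t<n. g t) = sum g ((\<lambda>c. off k + c) ` {..<sz k})"
  proof (rule sum.mono_neutral_right)
    show "(\<lambda>c. off k + c) ` {..<sz k} \<subseteq> {..<n}" using off_lt k by auto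
    show "\<forall>t\<in>{..<n} - (\<lambda>c. off k + c) ` {..<sz k}. g t = 0"
    proof
      fix t assume t: "t \<in> {..<n} - (\<lambda>c. off k + c) ` {..<sz k}"
      have "bl t \<noteq> k"
      proof
        assume "bl t = k"
        then have "t = off k + ps t" "ps t < sz k" using dc[of t] t by auto
        then show False using t by auto
      qed
      then show "g t = 0" using z t by auto
    qed
  qed simp
  also have "\<dots> = (\<Sum>c<sz k. g (off k + c))" by (subst sum.reindex) (auto simp: inj_on_def)
  finally show ?thesis .
qed

lemma conv_sum: assumes "pq < (m::nat)"
  shows "(\<Sum>c<m. (if pp \<le> c then fps_nth s (c - pp) else 0) * (if c \<le> pq then fps_nth u (pq - c) else 0))
       = (if pp \<le> pq then fps_nth (s * u) (pq - pp) else (0::complex))"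
proof -
  have "(\<Sum>c<m. (if pp \<le> c then fps_nth s (c - pp) else 0) * (if c \<le> pq then fps_nth u (pq - c) else 0))
      = (\<Sum>c<m. if c \<in> {pp..pq} then fps_nth s (c - pp) * fps_nth u (pq - c) else 0)"
    by (rule sum.cong) auto
  also have "\<dots> = sum (\<lambda>c. fps_nth s (c - pp) * fps_nth u (pq - c)) ({..<m} \<inter> {pp..pq})"
    by (rule sum.inter_restrict[symmetric]) simp
  also have "{..<m} \<inter> {pp..pq} = {pp..pq}" using assms by auto
  finally have 1: "(\<Sum>c<m. (if pp \<le> c then fps_nth s (c - pp) else 0) * (if c \<le> pq then fps_nth u (pq - c) else 0))
      = sum (\<lambda>c. fps_nth s (c - pp) * fps_nth u (pq - c)) {pp..pq}" .
  show ?thesis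
  proof (cases "pp \<le> pq")
    case True
    have "sum (\<lambda>c. fps_nth s (c - pp) * fps_nth u (pq - c)) {pp..pq} = sum (\<lambda>c. fps_nth s (c - pp) * fps_nth u (pq - c)) {0+pp..(pq-pp)+pp}"
      using True by simp
    also have "\<dots> = (\<Sum>i=0..pq-pp. fps_nth s i * fps_nth u (pq - pp - i))"
      by (subst sum.shift_bounds_cl_nat_ivl) (rule sum.cong, auto simp: diff_diff_left add.commute)
    also have "\<dots> = fps_nth (s * u) (pq - pp)" by (simp add: fps_mult_nth)
    finally show ?thesis using 1 True by simp
  next
    case False
    then show ?thesis using 1 by simp
  qed
qed

lemma Toe_mult: assumes k: "k < nb" shows "Toe k s * Toe k u = Toe k (s * u)"
proof (rule eq_matI)
  fix p q assume "p < dim_row (Toe k (s * u))" "q < dim_col (Toe k (s * u))"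
  then have pq: "p < n" "q < n" by auto
  have m: "(Toe k s * Toe k u) $$ (p,q) = (\<Sum>t<n. Toe k s $$ (p,t) * Toe k u $$ (t,q))"
    using mult_entry[OF Toe_carrier Toe_carrier pq] .
  show "(Toe k s * Toe k u) $$ (p,q) = Toe k (s * u) $$ (p,q)"
  proof (cases "bl p = k \<and> bl q = k")
    case False
    have "(\<Sum>t<n. Toe k s $$ (p,t) * Toe k u $$ (t,q)) = 0"
      by (rule sum.neutral) (use False pq in \<open>auto simp: Toe_entry\<close>)
    then show ?thesis using m False pq by (auto simp: Toe_entry)
  next
    case True
    have "(\<Sum>t<n. Toe k s $$ (p,t) * Toe k u $$ (t,q)) = (\<Sum>c<sz k. Toe k s $$ (p,off k + c) * Toe k u $$ (off k + c,q))"
      by (rule sum_blk[OF k]) (auto simp: Toe_entry pq)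
    also have "\<dots> = (\<Sum>c<sz k. (if ps p \<le> c then fps_nth s (c - ps p) else 0) * (if c \<le> ps q then fps_nth u (ps q - c) else 0))"
      by (rule sum.cong) (use True k pq in \<open>auto simp: Toe_entry\<close>)
    also have "\<dots> = (if ps p \<le> ps q then fps_nth (s * u) (ps q - ps p) else 0)"
      by (rule conv_sum) (use ps_lt[OF pq(2)] True in auto)
    finally show ?thesis using m True pq by (simp add: Toe_entry)
  qed
qed auto

definition fcnj :: "complex fps \<Rightarrow> complex fps" where "fcnj s = Abs_fps (\<lambda>i. cnj (fps_nth s i))"

lemma star_Toe: "star (Toe k s) = Toe k (fcnj s)"
proof (rule eq_matI)
  fix p q assume "p < dim_row (Toe k (fcnj s))" "q < dim_col (Toe k (fcnj s))"
  then have pq: "p < n" "q < n" by auto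
  have r: "rho q < n" "rho p < n" "bl (rho q) = bl q" "bl (rho p) = bl p"
    "ps (rho q) = sz (bl q) - 1 - ps q" "ps (rho p) = sz (bl p) - 1 - ps p"
    using rho_props pq by auto
  have l: "ps p < sz (bl p)" "ps q < sz (bl q)" using ps_lt pq by auto
  show "star (Toe k s) $$ (p,q) = Toe k (fcnj s) $$ (p,q)"
  proof (cases "bl p = k \<and> bl q = k")
    case True
    have e1: "(sz k - 1 - ps q \<le> sz k - 1 - ps p) = (ps p \<le> ps q)" using l True by auto
    have e2: "ps p \<le> ps q \<Longrightarrow> (sz k - 1 - ps p) - (sz k - 1 - ps q) = ps q - ps p" using l True by auto
    show ?thesis using star_entry[OF Toe_carrier pq] Toe_entry[OF r(1,2)] r True e1 e2
      by (auto simp: Toe_entry pq fcnj_def)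
  next
    case False
    then show ?thesis using star_entry[OF Toe_carrier pq] Toe_entry[OF r(1,2)] r
      by (auto simp: Toe_entry pq)
  qed
qed auto

lemma Toe_const: "Toe k (fps_const c) = Dg (\<lambda>i. if i = k then c else 0)"
proof (rule eq_matI)
  fix p q assume "p < dim_row (Dg (\<lambda>i. if i = k then c else 0))" "q < dim_col (Dg (\<lambda>i. if i = k then c else 0))"
  then have pq: "p < n" "q < n" by auto
  have "(bl p = k \<and> bl q = k \<and> ps p \<le> ps q \<and> ps q - ps p = 0) = (p = q \<and> bl p = k)"
    using eq_iff[OF pq] by auto
  then show "Toe k (fps_const c) $$ (p,q) = Dg (\<lambda>i. if i = k then c else 0) $$ (p,q)"
    by (auto simp: Toe_entry Dg_entry pq)
qed auto

lemma Toe_one: "Toe k 1 = Dg (\<lambda>i. if i = k then 1 else 0)"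
  using Toe_const[of k 1] by simp

lemma Dg_Toe: "Dg f * Toe k s = f k \<cdot>\<^sub>m Toe k s"
proof (rule eq_matI)
  fix p q assume "p < dim_row (f k \<cdot>\<^sub>m Toe k s)" "q < dim_col (f k \<cdot>\<^sub>m Toe k s)"
  then have pq: "p < n" "q < n" by auto
  have "(Dg f * Toe k s) $$ (p,q) = f (bl p) * Toe k s $$ (p,q)" using Dg_mult_left[OF Toe_carrier pq] .
  then show "(Dg f * Toe k s) $$ (p,q) = (f k \<cdot>\<^sub>m Toe k s) $$ (p,q)"
    using pq by (auto simp: Toe_entry)
qed auto

lemma Toe_Dg: "Toe k s * Dg f = f k \<cdot>\<^sub>m Toe k s"
proof (rule eq_matI)
  fix p q assume "p < dim_row (f k \<cdot>\<^sub>m Toe k s)" "q < dim_col (f k \<cdot>\<^sub>m Toe k s)"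
  then have pq: "p < n" "q < n" by auto
  have "(Toe k s * Dg f) $$ (p,q) = Toe k s $$ (p,q) * f (bl q)" using Dg_mult_right[OF Toe_carrier pq] .
  then show "(Toe k s * Dg f) $$ (p,q) = (f k \<cdot>\<^sub>m Toe k s) $$ (p,q)"
    using pq by (auto simp: Toe_entry)
qed auto

lemma supp_Toe: assumes X: "Am X" and k: "k < nb"
  and z: "\<And>p q. p < n \<Longrightarrow> q < n \<Longrightarrow> \<not> (bl p = k \<and> bl q = k) \<Longrightarrow> X $$ (p,q) = 0"
  shows "X = Toe k (Abs_fps (\<lambda>d. if d < sz k then X $$ (off k, off k + d) else 0))"
proof (rule eq_matI)
  have c: "X \<in> carrier_mat n n" and g: "gshift X" using X Am_gshift by auto
  have L: "lshift (sz k) (sz k) (\<lambda>r c. X $$ (off k + r, off k + c))" using g gshift_iff k by auto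
  fix p q assume "p < dim_row (Toe k (Abs_fps (\<lambda>d. if d < sz k then X $$ (off k, off k + d) else 0)))"
    "q < dim_col (Toe k (Abs_fps (\<lambda>d. if d < sz k then X $$ (off k, off k + d) else 0)))"
  then have pq: "p < n" "q < n" by auto
  show "X $$ (p,q) = Toe k (Abs_fps (\<lambda>d. if d < sz k then X $$ (off k, off k + d) else 0)) $$ (p,q)"
  proof (cases "bl p = k \<and> bl q = k")
    case False then show ?thesis using z pq by (auto simp: Toe_entry)
  next
    case True
    have e: "p = off k + ps p" "q = off k + ps q" using p_eq[OF pq(1)] p_eq[OF pq(2)] True by auto
    have l: "ps p < sz k" "ps q < sz k" using ps_lt[OF pq(1)] ps_lt[OF pq(2)] True by auto
    show ?thesis
    proof (cases "ps p \<le> ps q")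
      case True': True
      have "X $$ (off k + ps p, off k + ps q) = X $$ (off k + 0, off k + (ps q - ps p))"
        using lshift_part1[OF L l True'] by simp
      then show ?thesis using e l True True' pq by (auto simp: Toe_entry)
    next
      case False
      have "X $$ (off k + ps p, off k + ps q) = 0"
        using lshift_part2A[OF L _ l] False by simp
      then show ?thesis using e l True False pq by (auto simp: Toe_entry)
    qed
  qed
qed (use X Am_carrier in auto)

end

context blk begin

abbreviation M :: "complex mat \<Rightarrow> bool" where "M X \<equiv> X \<in> carrier_mat n n"

lemma mM[simp]: "M A \<Longrightarrow> M B \<Longrightarrow> M (A * B)" by (rule mult_carrier_mat)
lemma aM[simp]: "M A \<Longrightarrow> M B \<Longrightarrow> M (A + B)" by simp
lemma sM[simp]: "M A \<Longrightarrow> M (a \<cdot>\<^sub>m A)" by simp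
lemma asc: "M A \<Longrightarrow> M B \<Longrightarrow> M C \<Longrightarrow> A * B * C = A * (B * C)" by (rule assoc_mult_mat)
lemma dl: "M A \<Longrightarrow> M B \<Longrightarrow> M C \<Longrightarrow> A * (B + C) = A * B + A * C" by (rule mult_add_distrib_mat)
lemma dr: "M A \<Longrightarrow> M B \<Longrightarrow> M C \<Longrightarrow> (A + B) * C = A * C + B * C" by (rule add_mult_distrib_mat)
lemma sl: "M A \<Longrightarrow> M B \<Longrightarrow> (a \<cdot>\<^sub>m A) * B = a \<cdot>\<^sub>m (A * B)" by (rule mult_smult_assoc_mat)
lemma sr: "M A \<Longrightarrow> M B \<Longrightarrow> A * (a \<cdot>\<^sub>m B) = a \<cdot>\<^sub>m (A * B)" by (rule mult_smult_distrib)
lemma one_l: "M A \<Longrightarrow> 1\<^sub>m n * A = A" by simp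
lemma one_r: "M A \<Longrightarrow> A * 1\<^sub>m n = A" by simp
lemma zero_l: "M A \<Longrightarrow> 0\<^sub>m n n * A = 0\<^sub>m n n" by simp
lemma zero_r: "M A \<Longrightarrow> A * 0\<^sub>m n n = 0\<^sub>m n n" by simp
lemma zsm: "M A \<Longrightarrow> 0 \<cdot>\<^sub>m A = 0\<^sub>m n n" by (rule eq_matI) auto

lemma Dg_zero: "Dg (\<lambda>i. 0) = 0\<^sub>m n n" by (rule eq_matI) (auto simp: Dg_entry)

definition inv2 :: "complex mat \<Rightarrow> bool" where
  "inv2 X \<longleftrightarrow> M X \<and> (\<exists>U. M U \<and> X * U = 1\<^sub>m n \<and> U * X = 1\<^sub>m n)"

lemma inv2_mult: assumes "inv2 X" "inv2 Y" shows "inv2 (X * Y)"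
proof -
  obtain U where U: "M X" "M U" "X * U = 1\<^sub>m n" "U * X = 1\<^sub>m n" using assms(1) unfolding inv2_def by auto
  obtain V where V: "M Y" "M V" "Y * V = 1\<^sub>m n" "V * Y = 1\<^sub>m n" using assms(2) unfolding inv2_def by auto
  have e1: "Y * (V * U) = U" using asc[of Y V U] U V by simp
  have "X * Y * (V * U) = X * (Y * (V * U))" using U V by (simp add: asc)
  also have "\<dots> = 1\<^sub>m n" using U V e1 by simp
  finally have 1: "X * Y * (V * U) = 1\<^sub>m n" .
  have e2: "U * (X * Y) = Y" using asc[of U X Y] U V by simp
  have "V * U * (X * Y) = V * (U * (X * Y))" using U V by (simp add: asc)
  also have "\<dots> = 1\<^sub>m n" using U V e2 by simp
  finally have 2: "V * U * (X * Y) = 1\<^sub>m n" .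
  show ?thesis unfolding inv2_def using 1 2 U V by (intro conjI exI[of _ "V * U"]) auto
qed

lemma inv2_star: assumes "inv2 X" shows "inv2 (star X)"
proof -
  obtain U where U: "M X" "M U" "X * U = 1\<^sub>m n" "U * X = 1\<^sub>m n" using assms(1) unfolding inv2_def by auto
  have "star X * star U = 1\<^sub>m n" using star_mult[OF U(2,1)] U star_one by simp
  moreover have "star U * star X = 1\<^sub>m n" using star_mult[OF U(1,2)] U star_one by simp
  ultimately show ?thesis unfolding inv2_def by (intro conjI exI[of _ "star U"]) auto
qed

lemma inv2_one: "inv2 (1\<^sub>m n)" unfolding inv2_def by (intro conjI exI[of _ "1\<^sub>m n"]) auto

lemma nil_mult: assumes F: "M F" and FF: "F * F = 0\<^sub>m n n"
  shows "(1\<^sub>m n + a \<cdot>\<^sub>m F) * (1\<^sub>m n + b \<cdot>\<^sub>m F) = 1\<^sub>m n + (a + b) \<cdot>\<^sub>m F"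
proof -
  have z: "(a \<cdot>\<^sub>m F) * (b \<cdot>\<^sub>m F) = 0\<^sub>m n n" using F FF by (simp add: sl sr)
  have "(1\<^sub>m n + a \<cdot>\<^sub>m F) * (1\<^sub>m n + b \<cdot>\<^sub>m F) = 1\<^sub>m n * (1\<^sub>m n + b \<cdot>\<^sub>m F) + (a \<cdot>\<^sub>m F) * (1\<^sub>m n + b \<cdot>\<^sub>m F)"
    using F by (simp add: dr)
  also have "\<dots> = (1\<^sub>m n + b \<cdot>\<^sub>m F) + ((a \<cdot>\<^sub>m F) * 1\<^sub>m n + (a \<cdot>\<^sub>m F) * (b \<cdot>\<^sub>m F))"
    using F by (simp add: dl)
  also have "\<dots> = (1\<^sub>m n + b \<cdot>\<^sub>m F) + (a \<cdot>\<^sub>m F + 0\<^sub>m n n)" using F z by simp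
  also have "\<dots> = 1\<^sub>m n + (a + b) \<cdot>\<^sub>m F"
    by (rule eq_matI) (use F in \<open>auto simp: algebra_simps\<close>)
  finally show ?thesis .
qed

lemma inv2_nil: assumes F: "M F" and FF: "F * F = 0\<^sub>m n n" shows "inv2 (1\<^sub>m n + a \<cdot>\<^sub>m F)"
proof -
  have "(1\<^sub>m n + a \<cdot>\<^sub>m F) * (1\<^sub>m n + (-a) \<cdot>\<^sub>m F) = 1\<^sub>m n" using nil_mult[OF F FF] F by (simp add: zsm)
  moreover have "(1\<^sub>m n + (-a) \<cdot>\<^sub>m F) * (1\<^sub>m n + a \<cdot>\<^sub>m F) = 1\<^sub>m n" using nil_mult[OF F FF] F by (simp add: zsm)
  ultimately show ?thesis unfolding inv2_def using F by (intro conjI exI[of _ "1\<^sub>m n + (-a) \<cdot>\<^sub>m F"]) auto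
qed

lemma cong_mult: assumes "M X" "M Y" "M C"
  shows "star (X * Y) * C * (X * Y) = star Y * (star X * C * X) * Y"
  using assms by (simp add: star_mult asc)

definition good :: "complex mat \<Rightarrow> bool" where
  "good C \<longleftrightarrow> Am C \<and> star C = C \<and> inv2 C"

lemma good_cong: assumes C: "good C" and S: "Am S" "inv2 S" shows "good (star S * C * S)"
proof -
  have c: "M C" "M S" using C S unfolding good_def inv2_def by auto
  have "Am (star S * C * S)" using C S Am_mult Am_star unfolding good_def by auto
  moreover have "star (star S * C * S) = star S * C * S"
    using c C star_mult star_star unfolding good_def by (simp add: asc)
  moreover have "inv2 (star S * C * S)" using C S inv2_mult inv2_star unfolding good_def by auto
  ultimately show ?thesis unfolding good_def by auto
qed

lemma form_cong_mult: assumes C: "M C" "form B f C" and S: "M S" "form B (\<lambda>i. 1) S"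
  shows "form B f (star S * C * S)"
proof -
  have "form B (\<lambda>i. cnj 1) (star S)" using form_star[OF S] by simp
  then have "form B (\<lambda>i. 1) (star S)" by simp
  then have "form B (\<lambda>i. 1 * f i) (star S * C)" using form_mult[OF star_carrier C(1) _ C(2)] by blast
  then have "form B (\<lambda>i. 1 * f i * 1) (star S * C * S)" using form_mult[OF _ S(1) _ S(2)] C S by simp
  then show ?thesis by simp
qed

lemma two_point_r: assumes "a < n" "b < n" "a \<noteq> b"
  shows "(\<Sum>t<n. g t * ((if t = a then 1 else 0) + x * (if t = b then 1 else 0))) = g a + x * (g b :: complex)"
proof -
  have "(\<Sum>t<n. g t * ((if t = a then 1 else 0) + x * (if t = b then 1 else 0)))
     = (\<Sum>t<n. (if t = a then g a else 0) + (if t = b then x * g b else 0))"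
    by (rule sum.cong) (auto simp: algebra_simps)
  also have "\<dots> = (\<Sum>t<n. (if t = a then g a else 0)) + (\<Sum>t<n. (if t = b then x * g b else 0))"
    by (rule sum.distrib)
  also have "\<dots> = g a + x * g b" using assms by simp
  finally show ?thesis .
qed

lemma two_point_l: assumes "a < n" "b < n" "a \<noteq> b"
  shows "(\<Sum>t<n. ((if t = a then 1 else 0) + x * (if t = b then 1 else 0)) * g t) = g a + x * (g b :: complex)"
  using two_point_r[OF assms, of g x] by (simp add: mult.commute)

end

context blk begin

lemma off_props: "k < nb \<Longrightarrow> off k < n \<and> bl (off k) = k \<and> ps (off k) = 0"
  using bl_off[of k 0] ps_off[of k 0] sz_pos off_sz by auto

lemma pivot:
  assumes g: "good C" and fm: "form B f C" and Bs: "B \<subseteq> {..<nb}" and Bne: "B \<noteq> {}"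
  shows "\<exists>k\<in>B. \<exists>S. Am S \<and> inv2 S \<and> form B (\<lambda>i. 1) S \<and> (star S * C * S) $$ (off k, off k) \<noteq> 0"
proof -
  have fin: "finite B" using Bs finite_subset by blast
  have CM: "M C" "Am C" "star C = C" "inv2 C" using g unfolding good_def Am_def by auto
  have gs: "gshift C" using CM Am_gshift by auto
  define m where "m = Max (sz ` B)"
  have "m \<in> sz ` B" unfolding m_def using fin Bne by (intro Max_in) auto
  then obtain k0 where k0: "k0 \<in> B" "sz k0 = m" by auto
  have mx: "\<And>l. l \<in> B \<Longrightarrow> sz l \<le> m" using Max_ge fin unfolding m_def by auto
  have k0nb: "k0 < nb" using Bs k0 by auto
  have ok0: "off k0 < n" "bl (off k0) = k0" "ps (off k0) = 0" using off_props[OF k0nb] by auto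
  have lsh: "\<And>l. l < nb \<Longrightarrow> lshift (sz l) (sz k0) (\<lambda>r c. C $$ (off l + r, off k0 + c))"
    using gs gshift_iff k0nb by blast
  have m0: "0 < m" using sz_pos k0nb k0 by auto
  have ex: "\<exists>l\<in>B. sz l = m \<and> C $$ (off l, off k0) \<noteq> 0"
  proof (rule ccontr)
    assume na: "\<not> (\<exists>l\<in>B. sz l = m \<and> C $$ (off l, off k0) \<noteq> 0)"
    have col: "C $$ (s, off k0) = 0" if s: "s < n" for s
    proof (cases "bl s \<in> B")
      case False
      then have "C $$ (s, off k0) = (if s = off k0 then f (bl s) else 0)" using fm s ok0 unfolding form_def by auto
      moreover have "s \<noteq> off k0" using False ok0 k0 by auto
      ultimately show ?thesis by simp
    next
      case True
      define l where "l = bl s"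
      have lnb: "l < nb" using bl_lt s unfolding l_def by auto
      have le: "sz l \<le> m" using mx True unfolding l_def by auto
      have L: "lshift (sz l) m (\<lambda>r c. C $$ (off l + r, off k0 + c))" using lsh[OF lnb] k0 by simp
      have pl: "ps s < sz l" using ps_lt s unfolding l_def by auto
      have se: "s = off l + ps s" using p_eq[OF s] unfolding l_def by simp
      show ?thesis
      proof (cases "0 < ps s + (m - sz l)")
        case True
        have "C $$ (off l + ps s, off k0 + 0) = 0" using lshift_part2A[OF L le pl m0 True] by simp
        then show ?thesis using se by simp
      next
        case False
        then have "ps s = 0" "sz l = m" using le by auto
        then have "s = off l" using se by simp
        then show ?thesis using na True \<open>sz l = m\<close> unfolding l_def by auto
      qed
    qed
    obtain U where U: "M U" "U * C = 1\<^sub>m n" using CM unfolding inv2_def by auto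
    have "(U * C) $$ (off k0, off k0) = (\<Sum>s<n. U $$ (off k0, s) * C $$ (s, off k0))"
      using mult_entry[OF U(1) CM(1) ok0(1) ok0(1)] .
    also have "\<dots> = 0" using col by simp
    finally show False using U ok0 by simp
  qed
  then obtain l where l: "l \<in> B" "sz l = m" "C $$ (off l, off k0) \<noteq> 0" by blast
  have lnb: "l < nb" using Bs l by auto
  have ol: "off l < n" "bl (off l) = l" "ps (off l) = 0" using off_props[OF lnb] by auto
  have triv: "star (1\<^sub>m n) * C * 1\<^sub>m n = C" using CM star_one by simp
  show ?thesis
  proof (cases "C $$ (off k0, off k0) \<noteq> 0")
    case True
    then show ?thesis using k0 triv Am_one inv2_one form_one by metis
  next
    case F1: False
    show ?thesis
    proof (cases "C $$ (off l, off l) \<noteq> 0")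
      case True
      then show ?thesis using l triv Am_one inv2_one form_one by metis
    next
      case F2: False
      define c where "c = C $$ (off l, off k0)"
      have c0: "c \<noteq> 0" using l c_def by simp
      have lk: "l \<noteq> k0" using F1 l by auto
      have olk: "off l \<noteq> off k0" using lk ol ok0 by metis
      have szl: "sz l = sz k0" using l k0 by simp
      define F where "F = Fm l k0"
      define S where "S = 1\<^sub>m n + c \<cdot>\<^sub>m F"
      have SM: "M S" unfolding S_def F_def by simp
      have AmS: "Am S" unfolding S_def F_def using Am_add[OF Am_one Am_smult[OF Am_Fm[OF szl]]] .
      have invS: "inv2 S" unfolding S_def F_def using inv2_nil[OF Fm_carrier Fm_sq[OF lk]] .
      have "form B (\<lambda>i. 1 + c * 0) S" unfolding S_def F_def
        using form_add[OF one_carrier_mat _ form_one form_smult[OF _ form_Fm[OF l(1) k0(1)]]] by simp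
      then have formS: "form B (\<lambda>i. 1) S" by simp
      have colS: "S $$ (t, off k0) = (if t = off k0 then 1 else 0) + c * (if t = off l then 1 else 0)" if t: "t < n" for t
        unfolding S_def F_def using t ok0 Fm_col[OF lnb k0nb t] by simp
      have starS: "star S = 1\<^sub>m n + cnj c \<cdot>\<^sub>m star F"
        unfolding S_def F_def by (simp add: star_add star_smult star_one)
      have rowS: "star S $$ (off k0, s) = (if s = off k0 then 1 else 0) + cnj c * (if s = off l then 1 else 0)" if s: "s < n" for s
        unfolding starS F_def using s ok0 star_Fm_row[OF szl lnb k0nb s] by simp
      have A: "(star S * C) $$ (off k0, t) = C $$ (off k0, t) + cnj c * C $$ (off l, t)" if t: "t < n" for t
      proof -
        have "(star S * C) $$ (off k0, t) = (\<Sum>s<n. star S $$ (off k0, s) * C $$ (s, t))"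
          using mult_entry[OF star_carrier CM(1) ok0(1) t] .
        also have "\<dots> = (\<Sum>s<n. ((if s = off k0 then 1 else 0) + cnj c * (if s = off l then 1 else 0)) * C $$ (s, t))"
          by (rule sum.cong) (auto simp: rowS)
        also have "\<dots> = C $$ (off k0, t) + cnj c * C $$ (off l, t)"
          by (rule two_point_l) (use ok0 ol olk in auto)
        finally show ?thesis .
      qed
      have B: "(star S * C * S) $$ (off k0, off k0) = (star S * C) $$ (off k0, off k0) + c * (star S * C) $$ (off k0, off l)"
      proof -
        have "(star S * C * S) $$ (off k0, off k0) = (\<Sum>t<n. (star S * C) $$ (off k0, t) * S $$ (t, off k0))"
          using mult_entry[OF mM[OF star_carrier CM(1)] SM ok0(1) ok0(1)] .
        also have "\<dots> = (\<Sum>t<n. (star S * C) $$ (off k0, t) * ((if t = off k0 then 1 else 0) + c * (if t = off l then 1 else 0)))"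
          by (rule sum.cong) (auto simp: colS)
        also have "\<dots> = (star S * C) $$ (off k0, off k0) + c * (star S * C) $$ (off k0, off l)"
          by (rule two_point_r) (use ok0 ol olk in auto)
        finally show ?thesis .
      qed
      have herm: "C $$ (off k0, off l) = cnj c"
      proof -
        have L: "lshift (sz l) (sz k0) (\<lambda>r c. C $$ (off l + r, off k0 + c))" using lsh[OF lnb] .
        have r1: "rho (off l) = off l + (m - 1)" unfolding rho_def using ol l by simp
        have r2: "rho (off k0) = off k0 + (m - 1)" unfolding rho_def using ok0 k0 by simp
        have "C $$ (off l + (m-1), off k0 + (m-1)) = C $$ (off l + 0, off k0 + (m - 1 - (m-1)))"
          using lshift_part1[OF L, of "m-1" "m-1"] m0 l k0 by simp
        then have e: "C $$ (rho (off l), rho (off k0)) = c" unfolding r1 r2 c_def by simp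
        have "C $$ (off k0, off l) = star C $$ (off k0, off l)" using CM by simp
        also have "\<dots> = cnj (C $$ (rho (off l), rho (off k0)))" using star_entry[OF CM(1) ok0(1) ol(1)] .
        finally show ?thesis using e by simp
      qed
      have "(star S * C * S) $$ (off k0, off k0) = 2 * (c * cnj c)"
        using B A[OF ok0(1)] A[OF ol(1)] herm F1 F2 c_def by (simp add: algebra_simps)
      moreover have "2 * (c * cnj c) \<noteq> 0" using c0 by simp
      ultimately show ?thesis using k0(1) AmS invS formS by metis
    qed
  qed
qed

end

definition cf :: "real fps \<Rightarrow> complex fps" where "cf a = Abs_fps (\<lambda>i. complex_of_real (fps_nth a i))"

lemma cf_nth[simp]: "fps_nth (cf a) i = complex_of_real (fps_nth a i)" unfolding cf_def by simp

lemma cf_mult: "cf (a * b) = cf a * cf b"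
  by (rule fps_ext) (simp add: fps_mult_nth)

lemma cf_const: "cf (fps_const c) = fps_const (complex_of_real c)"
  by (rule fps_ext) simp

lemma cf_one: "cf 1 = 1"
  using cf_const[of 1] by simp

lemma real_sqrt_fps:
  fixes gr :: "real fps" assumes g0: "fps_nth gr 0 \<noteq> 0"
  shows "\<exists>s0 \<epsilon>. (\<epsilon> = 1 \<or> \<epsilon> = -1) \<and> fps_nth s0 0 \<noteq> 0 \<and> s0 * gr * s0 = fps_const \<epsilon>"
proof -
  define \<epsilon> :: real where "\<epsilon> = (if fps_nth gr 0 > 0 then 1 else -1)"
  define h where "h = fps_const \<epsilon> * inverse gr"
  have "fps_nth h 0 = \<epsilon> * inverse (fps_nth gr 0)" unfolding h_def by simp
  then have h0: "fps_nth h 0 > 0" unfolding \<epsilon>_def using g0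
    by (cases "fps_nth gr 0 > 0") (auto simp: inverse_negative_iff_negative)
  define s0 where "s0 = fps_radical (\<lambda>k x. root k x) (Suc (Suc 0)) h"
  have hne: "fps_nth h 0 \<noteq> 0" using h0 by simp
  have "(root (Suc (Suc 0)) (fps_nth h 0)) ^ Suc (Suc 0) = fps_nth h 0"
    by (rule real_root_pow_pos) (use h0 in auto)
  then have "((\<lambda>k x. root k x) (Suc (Suc 0)) (fps_nth h 0)) ^ Suc (Suc 0) = fps_nth h 0" by (simp only:)
  then have sq: "s0 ^ Suc (Suc 0) = h" unfolding s0_def
    using power_radical[OF hne, of "\<lambda>k x. root k x" "Suc 0"] by blast
  have "s0 * gr * s0 = (s0 * s0) * gr" by (metis mult.assoc mult.commute)
  also have "\<dots> = (s0 ^ Suc (Suc 0)) * gr" by (simp only: power_Suc power_0 mult_1_right)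
  also have "\<dots> = fps_const \<epsilon> * (inverse gr * gr)" unfolding sq h_def by (simp only: mult.assoc)
  also have "\<dots> = fps_const \<epsilon>" using inverse_mult_eq_1[OF g0] by simp
  finally have 1: "s0 * gr * s0 = fps_const \<epsilon>" .
  have "fps_nth s0 0 = root (Suc (Suc 0)) (fps_nth h 0)" unfolding s0_def by simp
  then have 2: "fps_nth s0 0 \<noteq> 0" using h0 real_root_gt_zero[of "Suc (Suc 0)" "fps_nth h 0"] by simp
  have 3: "\<epsilon> = 1 \<or> \<epsilon> = -1" unfolding \<epsilon>_def by simp
  show ?thesis using 1 2 3 by blast
qed


context blk begin

lemma DXD_entry: assumes X: "M X" and pq: "p < n" "q < n"
  shows "(Dg a * X * Dg b) $$ (p,q) = a (bl p) * X $$ (p,q) * b (bl q)"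
  using Dg_mult_right[OF mM[OF Dg_carrier X] pq] Dg_mult_left[OF X pq] by simp

definition Ek :: "nat \<Rightarrow> complex mat" where "Ek k = Dg (\<lambda>i. if i = k then 1 else 0)"
definition Qk :: "nat \<Rightarrow> complex mat" where "Qk k = Dg (\<lambda>i. if i = k then 0 else 1)"

lemma EQ_carrier[simp]: "M (Ek k)" "M (Qk k)" unfolding Ek_def Qk_def by simp_all

lemma EQ_alg: "Ek k * Ek k = Ek k" "Qk k * Qk k = Qk k" "Ek k * Qk k = 0\<^sub>m n n" "Qk k * Ek k = 0\<^sub>m n n"
  "Ek k + Qk k = 1\<^sub>m n" "star (Ek k) = Ek k" "star (Qk k) = Qk k"
  unfolding Ek_def Qk_def by (simp_all add: Dg_Dg Dg_add star_Dg Dg_zero Dg_one[symmetric] if_distrib cong: if_cong)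

lemma one_smult: "M A \<Longrightarrow> 1 \<cdot>\<^sub>m A = A" by (rule eq_matI) auto

lemma EQ_Toe: "Ek k * Toe k s = Toe k s" "Toe k s * Ek k = Toe k s" "Qk k * Toe k s = 0\<^sub>m n n" "Toe k s * Qk k = 0\<^sub>m n n"
  unfolding Ek_def Qk_def by (simp_all add: Dg_Toe Toe_Dg one_smult zsm)

lemma E_is_Toe: "Toe k 1 = Ek k" unfolding Ek_def by (rule Toe_one)

lemma fcnj_nth[simp]: "fps_nth (fcnj s) i = cnj (fps_nth s i)" unfolding fcnj_def by simp

lemma gamma_toe: assumes C: "Am C" and k: "k < nb"
  shows "Ek k * C * Ek k = Toe k (Abs_fps (\<lambda>d. if d < sz k then C $$ (off k, off k + d) else 0))"
proof -
  have CM: "M C" using C Am_carrier by auto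
  let ?X = "Ek k * C * Ek k"
  have AX: "Am ?X" unfolding Ek_def using Am_mult[OF Am_mult[OF Am_Dg C] Am_Dg] .
  have e: "?X $$ (p,q) = (if bl p = k then 1 else 0) * C $$ (p,q) * (if bl q = k then 1 else 0)" if "p < n" "q < n" for p q
    unfolding Ek_def using DXD_entry[OF CM that] by simp
  have "?X = Toe k (Abs_fps (\<lambda>d. if d < sz k then ?X $$ (off k, off k + d) else 0))"
    by (rule supp_Toe[OF AX k]) (auto simp: e)
  also have "Abs_fps (\<lambda>d. if d < sz k then ?X $$ (off k, off k + d) else 0)
      = Abs_fps (\<lambda>d. if d < sz k then C $$ (off k, off k + d) else 0)"
  proof -
    have "(\<lambda>d. if d < sz k then ?X $$ (off k, off k + d) else 0) = (\<lambda>d. if d < sz k then C $$ (off k, off k + d) else 0)"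
    proof
      fix d show "(if d < sz k then ?X $$ (off k, off k + d) else 0) = (if d < sz k then C $$ (off k, off k + d) else 0)"
        using e[of "off k" "off k + d"] off_lt[OF k] bl_off[OF k] off_props[OF k] by auto
    qed
    then show ?thesis by simp
  qed
  finally show ?thesis .
qed

lemma star_EXE: assumes "M X" shows "star (Ek k * X * Ek k) = Ek k * star X * Ek k"
  using assms by (simp add: star_mult EQ_alg asc)

lemma toe_real: assumes C: "Am C" "star C = C" and k: "k < nb"
  and g: "g = Abs_fps (\<lambda>d. if d < sz k then C $$ (off k, off k + d) else 0)"
  shows "cnj (fps_nth g d) = fps_nth g d"
proof (cases "d < sz k")
  case False then show ?thesis unfolding g by simp
next
  case True
  have CM: "M C" using C Am_carrier by auto
  have "Toe k (fcnj g) = star (Toe k g)" by (simp add: star_Toe)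
  also have "\<dots> = Toe k g" using gamma_toe[OF C(1) k, folded g] star_EXE[OF CM, of k] C by simp
  finally have T: "Toe k (fcnj g) = Toe k g" .
  have o: "off k < n" "off k + d < n" "bl (off k) = k" "bl (off k + d) = k" "ps (off k) = 0" "ps (off k + d) = d"
    using off_props[OF k] off_lt[OF k True] bl_off[OF k True] ps_off[OF k True] by auto
  have "Toe k (fcnj g) $$ (off k, off k + d) = Toe k g $$ (off k, off k + d)" using T by simp
  then show ?thesis using o by (simp add: Toe_entry)
qed

lemma real_fps: assumes "\<And>d. cnj (fps_nth g d) = fps_nth g d" shows "cf (Abs_fps (\<lambda>d. Re (fps_nth g d))) = g"
proof (rule fps_ext)
  fix d
  have "fps_nth g d \<in> \<real>" using assms Reals_cnj_iff by blast
  then show "fps_nth (cf (Abs_fps (\<lambda>d. Re (fps_nth g d)))) d = fps_nth g d" by simp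
qed

end

context blk begin

declare zero_l[simp] zero_r[simp] one_l[simp] one_r[simp]

lemma absorb: "M A \<Longrightarrow> M B \<Longrightarrow> M X \<Longrightarrow> A * B = R \<Longrightarrow> A * (B * X) = R * X"
  using asc by metis

lemma addneg: "M A \<Longrightarrow> A + (-1) \<cdot>\<^sub>m A = 0\<^sub>m n n" by (rule eq_matI) auto

lemma star_zero: "star (0\<^sub>m n n) = 0\<^sub>m n n"
  by (rule eq_matI) (auto simp: star_entry rho_props)

lemma fcnj_cf: "fcnj (cf a) = cf a" by (rule fps_ext) simp

lemma step:
  assumes gd: "good C" and fm: "form B f C" and Bs: "B \<subseteq> {..<nb}" and kB: "k \<in> B"
    and nz: "C $$ (off k, off k) \<noteq> 0"
  shows "\<exists>S \<epsilon>. Am S \<and> inv2 S \<and> form B (\<lambda>i. 1) S \<and> (\<epsilon> = 1 \<or> \<epsilon> = -1) \<and>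
               form (B - {k}) (f(k := \<epsilon>)) (star S * C * S)"
proof -
  have k: "k < nb" using Bs kB by auto
  have CA: "Am C" and CH: "star C = C" and CM[simp]: "M C" using gd unfolding good_def Am_def by auto
  define E where "E = Ek k"
  define Q where "Q = Qk k"
  have EM[simp]: "M E" "M Q" unfolding E_def Q_def by simp_all
  have EQ: "E * E = E" "Q * Q = Q" "E * Q = 0\<^sub>m n n" "Q * E = 0\<^sub>m n n" "E + Q = 1\<^sub>m n" "star E = E" "star Q = Q"
    unfolding E_def Q_def using EQ_alg by auto
  have ET: "E * Toe k s = Toe k s" "Toe k s * E = Toe k s" "Q * Toe k s = 0\<^sub>m n n" "Toe k s * Q = 0\<^sub>m n n" for s
    unfolding E_def Q_def using EQ_Toe by auto
  have QA: "Am Q" unfolding Q_def Qk_def by (rule Am_Dg)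
  define g where "g = Abs_fps (\<lambda>d. if d < sz k then C $$ (off k, off k + d) else 0)"
  have gam: "E * C * E = Toe k g" unfolding E_def g_def by (rule gamma_toe[OF CA k])
  have g0: "fps_nth g 0 \<noteq> 0" unfolding g_def using nz sz_pos[OF k] by simp
  have greal: "\<And>d. cnj (fps_nth g d) = fps_nth g d" using toe_real[OF CA CH k g_def] .
  define gr where "gr = Abs_fps (\<lambda>d. Re (fps_nth g d))"
  have cfg: "cf gr = g" unfolding gr_def using real_fps[OF greal] .
  have gr0: "fps_nth gr 0 \<noteq> 0" using g0 cfg by (metis cf_nth of_real_0)
  obtain s0 \<epsilon> where s0: "\<epsilon> = 1 \<or> \<epsilon> = -1" "fps_nth s0 0 \<noteq> 0" "s0 * gr * s0 = fps_const \<epsilon>"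
    using real_sqrt_fps[OF gr0] by blast
  define \<epsilon>' where "\<epsilon>' = complex_of_real \<epsilon>"
  have eps: "\<epsilon>' = 1 \<or> \<epsilon>' = -1" using s0(1) unfolding \<epsilon>'_def by auto
  define \<sigma> where "\<sigma> = Toe k (cf s0)"
  define \<sigma>i where "\<sigma>i = Toe k (cf (inverse s0))"
  define Gi where "Gi = Toe k (inverse g)"
  define T where "T = Toe k g"
  have TM[simp]: "M \<sigma>" "M \<sigma>i" "M Gi" "M T" unfolding \<sigma>_def \<sigma>i_def Gi_def T_def by simp_all
  have TA: "Am \<sigma>" "Am \<sigma>i" "Am Gi" unfolding \<sigma>_def \<sigma>i_def Gi_def by (simp_all add: Am_Toe)
  have ET2: "E * \<sigma> = \<sigma>" "\<sigma> * E = \<sigma>" "Q * \<sigma> = 0\<^sub>m n n" "\<sigma> * Q = 0\<^sub>m n n"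
    "E * \<sigma>i = \<sigma>i" "Q * \<sigma>i = 0\<^sub>m n n" "E * Gi = Gi" "Q * Gi = 0\<^sub>m n n"
    unfolding \<sigma>_def \<sigma>i_def Gi_def using ET by auto
  have F1: "Gi * T = E" unfolding Gi_def T_def E_def
    by (simp add: Toe_mult[OF k] inverse_mult_eq_1[OF g0] E_is_Toe)
  have F2: "T * Gi = E" unfolding Gi_def T_def E_def
    by (simp add: Toe_mult[OF k] inverse_mult_eq_1'[OF g0] E_is_Toe)
  have starT: "star T = T"
  proof -
    have "star T = star (E * C * E)" using gam T_def by simp
    also have "\<dots> = E * star C * E" unfolding E_def by (rule star_EXE[OF CM])
    also have "\<dots> = T" using CH gam T_def by simp
    finally show ?thesis .
  qed
  have F3: "star Gi = Gi"
  proof -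
    have a: "star Gi * T = E" using star_mult[OF TM(4) TM(3)] F2 EQ(6) starT by simp
    have b: "star Gi * E = star Gi" using star_mult[OF EM(1) TM(3)] ET2(7) EQ(6) by simp
    have "star Gi = star Gi * (T * Gi)" using b F2 by simp
    also have "\<dots> = (star Gi * T) * Gi" by (simp add: asc)
    also have "\<dots> = Gi" using a ET2(7) by simp
    finally show ?thesis .
  qed
  have sig1: "\<sigma> * \<sigma>i = E" unfolding \<sigma>_def \<sigma>i_def E_def
    by (simp add: Toe_mult[OF k] cf_mult[symmetric] inverse_mult_eq_1'[OF s0(2)] cf_one E_is_Toe)
  have sig2: "\<sigma>i * \<sigma> = E" unfolding \<sigma>_def \<sigma>i_def E_def
    by (simp add: Toe_mult[OF k] cf_mult[symmetric] inverse_mult_eq_1[OF s0(2)] cf_one E_is_Toe)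
  have starsig: "star \<sigma> = \<sigma>" unfolding \<sigma>_def by (simp add: star_Toe fcnj_cf)
  have sgs: "\<sigma> * T * \<sigma> = Dg (\<lambda>i. if i = k then \<epsilon>' else 0)"
  proof -
    have "\<sigma> * T * \<sigma> = Toe k (cf s0 * g * cf s0)" unfolding \<sigma>_def T_def by (simp add: Toe_mult[OF k])
    also have "cf s0 * g * cf s0 = cf (s0 * gr * s0)" using cfg by (simp add: cf_mult)
    also have "\<dots> = fps_const \<epsilon>'" using s0(3) cf_const \<epsilon>'_def by simp
    finally show ?thesis using Toe_const by simp
  qed
  define Z where "Z = Gi * C * Q"
  have ZM[simp]: "M Z" unfolding Z_def by simp
  have ZA: "Am Z" unfolding Z_def using Am_mult[OF Am_mult[OF TA(3) CA] QA] .
  have ZZ: "Z * Z = 0\<^sub>m n n"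
  proof -
    have "Z * Z = Gi * (C * ((Q * Gi) * (C * Q)))" unfolding Z_def by (simp add: asc)
    also have "\<dots> = 0\<^sub>m n n" using ET2(8) zero_l[of "C * Q"] zero_r[of C] zero_r[of Gi] by simp
    finally show ?thesis .
  qed
  define S1 where "S1 = 1\<^sub>m n + (-1) \<cdot>\<^sub>m Z"
  have S1M[simp]: "M S1" unfolding S1_def by simp
  have S1A: "Am S1" unfolding S1_def using Am_add[OF Am_one Am_smult[OF ZA]] .
  have S1I: "inv2 S1" unfolding S1_def using inv2_nil[OF ZM ZZ] .
  have "form B (\<lambda>i. 0 * f i * (if i = k then 0 else 1)) Z" unfolding Z_def Gi_def Q_def Qk_def
    using form_mult[OF _ _ form_mult[OF _ _ form_Toe[OF kB] fm] form_Dg] by simp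
  then have ZF: "form B (\<lambda>i. 0) Z" by simp
  have "form B (\<lambda>i. 1 + (-1) * 0) S1" unfolding S1_def using form_add[OF _ _ form_one form_smult[OF ZM ZF]] by simp
  then have S1F: "form B (\<lambda>i. 1) S1" by simp
  have starZ: "star Z = Q * C * Gi" unfolding Z_def using star_mult EQ(7) CH F3 by (simp add: asc)
  have starS1: "star S1 = 1\<^sub>m n + (-1) \<cdot>\<^sub>m (Q * C * Gi)"
    unfolding S1_def using starZ by (simp add: star_add star_smult star_one)
  have ES1: "E * star S1 = E"
  proof -
    have z: "E * (Q * C * Gi) = 0\<^sub>m n n" using absorb[of E Q "C * Gi"] EQ(3) by (simp add: asc)
    have "E * star S1 = E * 1\<^sub>m n + E * ((-1) \<cdot>\<^sub>m (Q * C * Gi))" unfolding starS1 by (simp add: dl)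
    also have "\<dots> = E" using z by (simp add: sr)
    finally show ?thesis .
  qed
  have S1Q: "S1 * Q = Q + (-1) \<cdot>\<^sub>m Z"
  proof -
    have z: "Z * Q = Z" unfolding Z_def using EQ(2) by (simp add: asc)
    show ?thesis unfolding S1_def using z by (simp add: dr sl)
  qed
  have S1E: "S1 * E = E"
  proof -
    have z: "Z * E = 0\<^sub>m n n" unfolding Z_def using EQ(4) by (simp add: asc)
    show ?thesis unfolding S1_def using z by (simp add: dr sl)
  qed
  define C2 where "C2 = star S1 * C * S1"
  have C2M[simp]: "M C2" unfolding C2_def by simp
  have ECGi: "E * C * Gi = E"
  proof -
    have "E * C * Gi = E * C * (E * Gi)" using ET2(7) by simp
    also have "\<dots> = (E * C * E) * Gi" by (simp add: asc)
    also have "\<dots> = E" using gam T_def F2 by simp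
    finally show ?thesis .
  qed
  have G1: "E * C2 * Q = 0\<^sub>m n n"
  proof -
    have "E * C2 * Q = (E * star S1) * C * (S1 * Q)" unfolding C2_def by (simp add: asc)
    also have "\<dots> = E * C * (Q + (-1) \<cdot>\<^sub>m Z)" using ES1 S1Q by simp
    also have "\<dots> = E * C * Q + (-1) \<cdot>\<^sub>m (E * C * Z)" by (simp add: dl sr)
    also have "E * C * Z = (E * C * Gi) * C * Q" unfolding Z_def by (simp add: asc)
    also have "\<dots> = E * C * Q" using ECGi by simp
    finally show ?thesis using addneg[of "E * C * Q"] by simp
  qed
  have G2: "E * C2 * E = T"
  proof -
    have "E * C2 * E = (E * star S1) * C * (S1 * E)" unfolding C2_def by (simp add: asc)
    also have "\<dots> = T" using ES1 S1E gam T_def by simp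
    finally show ?thesis .
  qed
  define S3 where "S3 = \<sigma> + Q"
  have S3M[simp]: "M S3" unfolding S3_def by simp
  have S3A: "Am S3" unfolding S3_def using Am_add[OF TA(1) QA] .
  have S3I: "inv2 S3"
  proof -
    have 1: "S3 * (\<sigma>i + Q) = 1\<^sub>m n"
    proof -
      have "S3 * (\<sigma>i + Q) = \<sigma> * \<sigma>i + Q * \<sigma>i + (\<sigma> * Q + Q * Q)" unfolding S3_def by (simp add: dl dr)
      also have "\<dots> = E + Q" using sig1 ET2 EQ by simp
      finally show ?thesis using EQ by simp
    qed
    have 2: "(\<sigma>i + Q) * S3 = 1\<^sub>m n"
    proof -
      have "(\<sigma>i + Q) * S3 = \<sigma>i * \<sigma> + Q * \<sigma> + (\<sigma>i * Q + Q * Q)" unfolding S3_def by (simp add: dl dr)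
      also have "\<sigma>i * Q = 0\<^sub>m n n" unfolding \<sigma>i_def using ET by simp
      also have "\<sigma>i * \<sigma> + Q * \<sigma> + (0\<^sub>m n n + Q * Q) = E + Q" using sig2 ET2 EQ by simp
      finally show ?thesis using EQ by simp
    qed
    show ?thesis unfolding inv2_def using 1 2 by (intro conjI exI[of _ "\<sigma>i + Q"]) auto
  qed
  have "form B (\<lambda>i. 0 + (if i = k then 0 else 1)) S3" unfolding S3_def \<sigma>_def Q_def Qk_def
    using form_add[OF _ _ form_Toe[OF kB] form_Dg] by simp
  then have S3F: "form B (\<lambda>i. 1) S3" by (rule form_cong) (use kB in auto)
  have starS3: "star S3 = \<sigma> + Q" unfolding S3_def using starsig EQ(7) by (simp add: star_add)
  have S3Q: "S3 * Q = Q" unfolding S3_def using ET2 EQ by (simp add: dr)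
  have S3E: "S3 * E = \<sigma>" unfolding S3_def using ET2 EQ by (simp add: dr)
  have ES3: "E * star S3 = \<sigma>" unfolding starS3 using ET2 EQ by (simp add: dl)
  define C3 where "C3 = star S3 * C2 * S3"
  have C3M[simp]: "M C3" unfolding C3_def by simp
  have gd2: "good C2" unfolding C2_def using good_cong[OF gd S1A S1I] .
  have gd3: "good C3" unfolding C3_def using good_cong[OF gd2 S3A S3I] .
  have H1: "E * C3 * Q = 0\<^sub>m n n"
  proof -
    have "E * C3 * Q = (E * star S3) * C2 * (S3 * Q)" unfolding C3_def by (simp add: asc)
    also have "\<dots> = (\<sigma> * E) * C2 * Q" using ES3 S3Q ET2 by simp
    also have "\<dots> = \<sigma> * (E * C2 * Q)" by (simp add: asc)
    also have "\<dots> = 0\<^sub>m n n" using G1 by simp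
    finally show ?thesis .
  qed
  have H3: "E * C3 * E = Dg (\<lambda>i. if i = k then \<epsilon>' else 0)"
  proof -
    have "E * C3 * E = (E * star S3) * C2 * (S3 * E)" unfolding C3_def by (simp add: asc)
    also have "\<dots> = (\<sigma> * E) * C2 * (E * \<sigma>)" using ES3 S3E ET2 by simp
    also have "\<dots> = \<sigma> * (E * C2 * E) * \<sigma>" by (simp add: asc)
    also have "\<dots> = Dg (\<lambda>i. if i = k then \<epsilon>' else 0)" using G2 sgs by simp
    finally show ?thesis .
  qed
  have H2: "Q * C3 * E = 0\<^sub>m n n"
  proof -
    have sC3: "star C3 = C3" using gd3 unfolding good_def by auto
    have "star (E * C3 * Q) = star Q * star C3 * star E" by (simp add: star_mult asc)
    then have "Q * C3 * E = star (E * C3 * Q)" using sC3 EQ by simp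
    then show ?thesis using H1 star_zero by simp
  qed
  define S where "S = S1 * S3"
  have SC: "star S * C * S = C3" unfolding S_def C3_def C2_def using cong_mult[OF S1M S3M CM] .
  have SA: "Am S" unfolding S_def using Am_mult[OF S1A S3A] .
  have SI: "inv2 S" unfolding S_def using inv2_mult[OF S1I S3I] .
  have SF: "form B (\<lambda>i. 1) S" unfolding S_def using form_mult[OF S1M S3M S1F S3F] by simp
  have fC3: "form B f C3" unfolding C3_def C2_def
    using form_cong_mult[OF _ form_cong_mult[OF CM fm S1M S1F] S3M S3F] by simp
  have "form (B - {k}) (f(k := \<epsilon>')) C3"
    unfolding form_def
  proof (intro allI impI)
    fix p q assume pq: "p < n" "q < n" and nn: "\<not> (bl p \<in> B - {k} \<and> bl q \<in> B - {k})"
    have e1: "(E * C3 * Q) $$ (p,q) = (if bl p = k then 1 else 0) * C3 $$ (p,q) * (if bl q = k then 0 else 1)"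
      unfolding E_def Q_def Ek_def Qk_def using DXD_entry[OF C3M pq] by simp
    have e2: "(Q * C3 * E) $$ (p,q) = (if bl p = k then 0 else 1) * C3 $$ (p,q) * (if bl q = k then 1 else 0)"
      unfolding E_def Q_def Ek_def Qk_def using DXD_entry[OF C3M pq] by simp
    have e3: "(E * C3 * E) $$ (p,q) = (if bl p = k then 1 else 0) * C3 $$ (p,q) * (if bl q = k then 1 else 0)"
      unfolding E_def Ek_def using DXD_entry[OF C3M pq] by simp
    show "C3 $$ (p,q) = (if p = q then (f(k := \<epsilon>')) (bl p) else 0)"
    proof (cases "bl p \<in> B \<and> bl q \<in> B")
      case False
      then have "C3 $$ (p,q) = (if p = q then f (bl p) else 0)" using fC3 pq unfolding form_def by auto
      moreover have "p = q \<Longrightarrow> bl p \<noteq> k" using False kB by auto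
      ultimately show ?thesis by auto
    next
      case True
      then have kk: "bl p = k \<or> bl q = k" using nn by auto
      show ?thesis
      proof (cases "bl p = k"; cases "bl q = k")
        assume a: "bl p = k" "bl q = k"
        then show ?thesis using e3 H3 pq by (auto simp: Dg_entry)
      next
        assume a: "bl p = k" "bl q \<noteq> k"
        then have "p \<noteq> q" by auto
        then show ?thesis using e1 H1 pq a by auto
      next
        assume a: "bl p \<noteq> k" "bl q = k"
        then have "p \<noteq> q" by auto
        then show ?thesis using e2 H2 pq a by auto
      next
        assume a: "bl p \<noteq> k" "bl q \<noteq> k"
        then show ?thesis using kk by auto
      qed
    qed
  qed
  then show ?thesis using SA SI SF eps SC by metis
qed

end

context blk begin

lemma main:
  "finite B \<Longrightarrow> B \<subseteq> {..<nb} \<Longrightarrow> good C \<Longrightarrow> form B f C \<Longrightarrow> (\<forall>i<nb. i \<notin> B \<longrightarrow> f i = 1 \<or> f i = -1) \<Longrightarrow>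
   \<exists>S eps. Am S \<and> inv2 S \<and> (\<forall>i<nb. eps i = 1 \<or> eps i = -1) \<and> star S * C * S = Dg eps"
proof (induction "card B" arbitrary: B C f)
  case 0
  then have B: "B = {}" by simp
  have CM: "M C" using "0.prems"(3) unfolding good_def Am_def by auto
  have "C = Dg f" using form_empty[OF CM] "0.prems"(4) B by simp
  moreover have "star (1\<^sub>m n) * C * 1\<^sub>m n = C" using CM star_one by simp
  ultimately have e: "star (1\<^sub>m n) * C * 1\<^sub>m n = Dg f" by simp
  have h: "\<forall>i<nb. f i = 1 \<or> f i = -1" using "0.prems"(5) B by auto
  show ?case by (rule exI[of _ "1\<^sub>m n"], rule exI[of _ f]) (use Am_one inv2_one e h in blast)
next
  case (Suc m)
  note prems = Suc.prems
  have Bne: "B \<noteq> {}" using Suc.hyps(2) by auto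
  have CM: "M C" using prems(3) unfolding good_def Am_def by auto
  obtain k S0 where k: "k \<in> B" and S0: "Am S0" "inv2 S0" "form B (\<lambda>i. 1) S0"
    and nz: "(star S0 * C * S0) $$ (off k, off k) \<noteq> 0"
    using pivot[OF prems(3) prems(4) prems(2) Bne] by blast
  have S0M: "M S0" using S0 unfolding Am_def by auto
  define C1 where "C1 = star S0 * C * S0"
  have g1: "good C1" unfolding C1_def using good_cong[OF prems(3) S0(1,2)] .
  have f1: "form B f C1" unfolding C1_def using form_cong_mult[OF CM prems(4) S0M S0(3)] .
  obtain S' \<epsilon> where S': "Am S'" "inv2 S'" "form B (\<lambda>i. 1) S'" and eps: "\<epsilon> = 1 \<or> \<epsilon> = -1"
    and f3: "form (B - {k}) (f(k := \<epsilon>)) (star S' * C1 * S')"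
    using step[OF g1 f1 prems(2) k nz[folded C1_def]] by blast
  have S'M: "M S'" using S' unfolding Am_def by auto
  define C3 where "C3 = star S' * C1 * S'"
  have g3: "good C3" unfolding C3_def using good_cong[OF g1 S'(1,2)] .
  have c: "m = card (B - {k})" using Suc.hyps(2) k prems(1) by simp
  have h: "\<forall>i<nb. i \<notin> B - {k} \<longrightarrow> (f(k := \<epsilon>)) i = 1 \<or> (f(k := \<epsilon>)) i = -1"
    using prems(5) eps by auto
  obtain S4 eps where S4: "Am S4" "inv2 S4" "\<forall>i<nb. eps i = 1 \<or> eps i = -1" "star S4 * C3 * S4 = Dg eps"
    using Suc.hyps(1)[OF c _ _ g3 f3[folded C3_def] h] prems(1,2) by blast
  have S4M: "M S4" using S4 unfolding Am_def by auto
  define S where "S = S0 * S' * S4"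
  have "star S * C * S = star S4 * (star (S0 * S') * C * (S0 * S')) * S4"
    unfolding S_def using cong_mult[OF mM[OF S0M S'M] S4M CM] .
  also have "star (S0 * S') * C * (S0 * S') = C3"
    unfolding C3_def C1_def using cong_mult[OF S0M S'M CM] .
  finally have "star S * C * S = Dg eps" using S4(4) by simp
  moreover have "Am S" unfolding S_def using Am_mult[OF Am_mult[OF S0(1) S'(1)] S4(1)] .
  moreover have "inv2 S" unfolding S_def using inv2_mult[OF inv2_mult[OF S0(2) S'(2)] S4(2)] .
  ultimately show ?case using S4(3) by blast
qed

lemma form_all: "form {..<nb} f C"
  unfolding form_def using bl_lt by auto

end

theorem lemma4p1:
  fixes N :: "nat list" and C :: "complex mat"
  assumes "\<forall>i < length N. 1 \<le> N!i"
    and "sorted N"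
    and "C \<in> carrier_mat (blk_size N) (blk_size N)"
    and "invertible_mat C"
    and "N_upper_toeplitz N C"
    and "N_hermitian N C"
  shows "\<exists>S eps. S \<in> carrier_mat (blk_size N) (blk_size N) \<and> invertible_mat S \<and>
           N_upper_toeplitz N S \<and>
           (\<forall>i < length N. eps i = 1 \<or> eps i = -1) \<and>
           blk_star N S * C * S = sign_blkdiag N eps"
proof -
  interpret blk N using assms(1,2) by unfold_locales
  have CM: "M C" using assms(3) .
  have CA: "Am C" using assms(5) toeplitz_iff Am_gshift by auto
  have CH: "star C = C" using assms(6) unfolding N_hermitian_def .
  obtain B where B: "C * B = 1\<^sub>m (dim_row C)" "B * C = 1\<^sub>m (dim_row B)"
    using assms(4) unfolding invertible_mat_def inverts_mat_def by auto
  have dB: "dim_col B = n" using arg_cong[OF B(1), of dim_col] CM by simp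
  have dB2: "dim_row B = n" using arg_cong[OF B(2), of dim_col] CM by simp
  have BM: "M B" using dB dB2 by auto
  have CI: "inv2 C" unfolding inv2_def using CM BM B by auto
  have gd: "good C" unfolding good_def using CA CH CI by auto
  obtain S eps where S: "Am S" "inv2 S" "\<forall>i<nb. eps i = 1 \<or> eps i = -1" "star S * C * S = Dg eps"
    using main[OF _ _ gd form_all[of "\<lambda>i. 1" C]] by auto
  have SM: "M S" using S unfolding Am_def by auto
  obtain U where U: "M U" "S * U = 1\<^sub>m n" "U * S = 1\<^sub>m n" using S(2) unfolding inv2_def by auto
  have "invertible_mat S" unfolding invertible_mat_def inverts_mat_def square_mat.simps
    using SM U by (intro conjI exI[of _ U]) auto
  moreover have "N_upper_toeplitz N S" using S(1) toeplitz_iff Am_gshift by auto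
  moreover have "blk_star N S * C * S = sign_blkdiag N eps" using S(4) sign_eq by simp
  ultimately show ?thesis using SM S(3) by blast
qed


end
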